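(* Let $\phi:\mathbb{C}_0\to\mathbb{C}_0$ be a non-constant analytic function of the form $\phi(s)=c_0 s+\varphi(s)$ with $c_0\in\mathbb{N}_0$ and $\varphi\in\mathcal{D}$, and suppose that $C_\phi f=f\circ\phi$ belongs to $\mathcal{A}^+$ for every $f\in\mathcal{A}^+$, so that $C_\phi:\mathcal{A}^+\to\mathcal{A}^+$ is a composition operator. Then $C_\phi$ is an automorphism of $\mathcal{A}^+$ (i.e. a bijective algebra homomorphism of $\mathcal{A}^+$ onto itself) if and only if $\phi$ is a vertical translation: $\phi(s)=s+i\tau$ for some real number $\tau$.
   Context: For $\theta\in\mathbb{R}$, $\mathbb{C}_\theta=\{s\in\mathbb{C}:\operatorname{Re}s>\theta\}$. The Wiener–Dirichlet algebra $\mathcal{A}^+$ is the set of functions $f(s)=\sum_{n\ge1}a_n n^{-s}$ with $\|f\|_{\mathcal{A}^+}=\sum_{n\ge1}|a_n|<\infty$, viewed as functions on $\{\operatorname{Re}s\ge0\}$ (where the series converge absolutely); it is a commutative unital Banach algebra under pointwise multiplication (Dirichlet convolution of coefficients: $c_n=\sum_{ij=n}a_ib_j$). $\mathcal{D}$ denotes the space of analytic functions $\mathbb{C}_0\to\mathbb{C}$ which are representable by a convergent Dirichlet series $\sum_{n\ge1}c_n n^{-s}$ for $\operatorname{Re}s$ large enough. $\mathbb{N}_0=\{0,1,2,\dots\}$. *)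

theory Defs
  imports "HOL-Analysis.Analysis"
begin

definition halfplane :: "real \<Rightarrow> complex set" where
  "halfplane \<theta> = {s. Re s > \<theta>}"

text \<open>Value of the Dirichlet series with coefficients a (a n is the coefficient of n^(-s);
  the index 0 plays no role since 0 powr z = 0).\<close>
definition dirichlet_val :: "(nat \<Rightarrow> complex) \<Rightarrow> complex \<Rightarrow> complex" where
  "dirichlet_val a s = (\<Sum>n. a n * of_nat n powr (- s))"

text \<open>The Wiener-Dirichlet algebra A+, represented by coefficient sequences
  (indexed by n >= 1, a 0 = 0) with absolutely summable coefficients.\<close>
definition Aplus :: "(nat \<Rightarrow> complex) set" where
  "Aplus = {a. a 0 = 0 \<and> summable (\<lambda>n. norm (a n))}"

definition dconv :: "(nat \<Rightarrow> complex) \<Rightarrow> (nat \<Rightarrow> complex) \<Rightarrow> nat \<Rightarrow> complex" where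
  "dconv a b n = (\<Sum>d\<in>{d. d dvd n}. a d * b (n div d))"

definition dunit :: "nat \<Rightarrow> complex" where
  "dunit n = (if n = 1 then 1 else 0)"

definition Dclass :: "(complex \<Rightarrow> complex) set" where
  "Dclass = {g. g holomorphic_on halfplane 0 \<and>
     (\<exists>c :: nat \<Rightarrow> complex. \<exists>\<sigma> :: real. \<forall>s. Re s > \<sigma> \<longrightarrow>
        (\<lambda>n. c n * of_nat n powr (- s)) sums g s)}"

text \<open>The composition operator on A+ (coefficient level): C_phi a is the element b of A+
  whose Dirichlet series equals f_a o phi on C_0 (unique by uniqueness of coefficients).\<close>
definition comp_op :: "(complex \<Rightarrow> complex) \<Rightarrow> (nat \<Rightarrow> complex) \<Rightarrow> (nat \<Rightarrow> complex)" where
  "comp_op \<phi> a = (THE b. b \<in> Aplus \<and>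
      (\<forall>s\<in>halfplane 0. dirichlet_val b s = dirichlet_val a (\<phi> s)))"

definition Aplus_automorphism :: "((nat \<Rightarrow> complex) \<Rightarrow> (nat \<Rightarrow> complex)) \<Rightarrow> bool" where
  "Aplus_automorphism T \<longleftrightarrow>
     bij_betw T Aplus Aplus \<and>
     (\<forall>a\<in>Aplus. \<forall>b\<in>Aplus. T (\<lambda>n. a n + b n) = (\<lambda>n. T a n + T b n)) \<and>
     (\<forall>c::complex. \<forall>a\<in>Aplus. T (\<lambda>n. c * a n) = (\<lambda>n. c * T a n)) \<and>
     (\<forall>a\<in>Aplus. \<forall>b\<in>Aplus. T (dconv a b) = dconv (T a) (T b)) \<and>
     T dunit = dunit"

end

theory Submission
  imports Defs "HOL-Complex_Analysis.Complex_Analysis"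
begin

lemma norm_npow: "norm (of_nat n powr (- s) :: complex) = real n powr (- Re s)"
  using norm_powr_real_powr[of "of_nat n :: complex" "-s"] by simp

lemma norm_npow_le1: "Re s \<ge> 0 \<Longrightarrow> norm (of_nat n powr (- s) :: complex) \<le> 1"
proof (cases "n = 0")
  case False
  assume "Re s \<ge> 0"
  have "real n powr (- Re s) \<le> real n powr 0" using False \<open>Re s \<ge> 0\<close> by (intro powr_mono) auto
  thus ?thesis using False by (simp add: norm_npow)
qed simp

lemma npow_0 [simp]: "(of_nat 0 :: complex) powr z = 0" by simp

lemma Aplus_summable:
  assumes "a \<in> Aplus" "Re s \<ge> 0"
  shows "summable (\<lambda>n. norm (a n * of_nat n powr (- s)))"
proof (rule summable_comparison_test)
  show "summable (\<lambda>n. norm (a n))" using assms by (simp add: Aplus_def)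
  show "\<exists>N. \<forall>n\<ge>N. norm (norm (a n * of_nat n powr (- s))) \<le> norm (a n)"
    using norm_npow_le1[OF assms(2)] by (auto simp: norm_mult intro!: mult_left_le)
qed

lemma dirichlet_val_sums:
  assumes "a \<in> Aplus" "Re s \<ge> 0"
  shows "(\<lambda>n. a n * of_nat n powr (- s)) sums dirichlet_val a s"
  unfolding dirichlet_val_def using Aplus_summable[OF assms]
  by (simp add: summable_norm_cancel summable_sums)

lemma dirichlet_val_bound:
  assumes "a \<in> Aplus" "Re s \<ge> 0"
  shows "norm (dirichlet_val a s) \<le> (\<Sum>n. norm (a n))"
proof -
  have "norm (dirichlet_val a s) \<le> (\<Sum>n. norm (a n * of_nat n powr (- s)))"
    unfolding dirichlet_val_def using Aplus_summable[OF assms] by (rule summable_norm)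
  also have "\<dots> \<le> (\<Sum>n. norm (a n))"
    using Aplus_summable[OF assms] assms norm_npow_le1[OF assms(2)]
    by (intro suminf_le) (auto simp: Aplus_def norm_mult intro!: mult_left_le)
  finally show ?thesis .
qed

lemma tail_bound:
  fixes c :: "nat \<Rightarrow> complex"
  assumes summ: "summable (\<lambda>n. norm (c n) * real n powr (- \<sigma>1))"
    and w: "Re w \<ge> \<sigma>1"
  shows "summable (\<lambda>n. c n * of_nat n powr (- w))"
    and "norm ((\<Sum>n. c n * of_nat n powr (- w)) - (\<Sum>n\<le>m. c n * of_nat n powr (- w)))
           \<le> (\<Sum>n. norm (c n) * real n powr (- \<sigma>1)) * real (Suc m) powr (\<sigma>1 - Re w)"
proof -
  define f where "f n = c n * of_nat n powr (- w)" for n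
  define g where "g n = norm (c n) * real n powr (- \<sigma>1)" for n
  have fg: "norm (f n) \<le> g n * real n powr (\<sigma>1 - Re w)" for n
  proof (cases "n = 0")
    case True then show ?thesis by (simp add: f_def g_def)
  next
    case False
    have "norm (f n) = norm (c n) * real n powr (- Re w)" by (simp add: f_def norm_mult norm_npow)
    also have "real n powr (- Re w) = real n powr (- \<sigma>1) * real n powr (\<sigma>1 - Re w)"
      by (simp add: powr_add[symmetric])
    finally show ?thesis by (simp add: g_def)
  qed
  have fg1: "norm (f n) \<le> g n" for n
  proof -
    have "real n powr (\<sigma>1 - Re w) \<le> 1"
    proof (cases "n = 0")
      case False
      have "real n powr (\<sigma>1 - Re w) \<le> real n powr 0" using False w by (intro powr_mono) auto
      thus ?thesis using False by simp
    qed simp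
    moreover have "g n \<ge> 0" by (simp add: g_def)
    ultimately show ?thesis using fg[of n] by (meson mult_left_le order_trans)
  qed
  have sf: "summable (\<lambda>n. norm (f n))"
    by (rule summable_comparison_test[OF _ summ]) (use fg1 g_def in auto)
  then show "summable (\<lambda>n. c n * of_nat n powr (- w))"
    unfolding f_def by (rule summable_norm_cancel)
  have sg: "summable g" using summ by (simp add: g_def[abs_def])
  have "(\<Sum>n. f n) - (\<Sum>n\<le>m. f n) = (\<Sum>n. f (n + Suc m))"
    using suminf_split_initial_segment[OF summable_norm_cancel[OF sf], of "Suc m"]
    by (simp add: lessThan_Suc_atMost)
  also have "norm \<dots> \<le> (\<Sum>n. norm (f (n + Suc m)))"
    by (rule summable_norm) (use sf summable_ignore_initial_segment in blast)
  also have "\<dots> \<le> (\<Sum>n. g (n + Suc m) * real (Suc m) powr (\<sigma>1 - Re w))"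
  proof (rule suminf_le)
    fix n
    have "real (n + Suc m) powr (\<sigma>1 - Re w) \<le> real (Suc m) powr (\<sigma>1 - Re w)"
      using w by (intro powr_mono2') auto
    then show "norm (f (n + Suc m)) \<le> g (n + Suc m) * real (Suc m) powr (\<sigma>1 - Re w)"
      by (rule order_trans[OF fg[of "n + Suc m"] mult_left_mono]) (simp_all add: g_def)
  next
    show "summable (\<lambda>n. norm (f (n + Suc m)))" using sf summable_ignore_initial_segment by blast
    show "summable (\<lambda>n. g (n + Suc m) * real (Suc m) powr (\<sigma>1 - Re w))"
      by (intro summable_mult2 summable_ignore_initial_segment sg)
  qed
  also have "\<dots> = (\<Sum>n. g (n + Suc m)) * real (Suc m) powr (\<sigma>1 - Re w)"
    by (intro suminf_mult2[symmetric] summable_ignore_initial_segment sg)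
  also have "(\<Sum>n. g (n + Suc m)) \<le> (\<Sum>n. g n)"
  proof -
    have "(\<Sum>n. g n) = (\<Sum>n<Suc m. g n) + (\<Sum>n. g (n + Suc m))"
      using suminf_split_initial_segment[OF sg, of "Suc m"] by simp
    moreover have "(\<Sum>n<Suc m. g n) \<ge> 0" by (intro sum_nonneg) (simp add: g_def)
    ultimately show ?thesis by linarith
  qed
  hence "(\<Sum>n. g (n + Suc m)) * real (Suc m) powr (\<sigma>1 - Re w) \<le> (\<Sum>n. g n) * real (Suc m) powr (\<sigma>1 - Re w)"
    by (intro mult_right_mono) auto
  finally show "norm ((\<Sum>n. c n * of_nat n powr (- w)) - (\<Sum>n\<le>m. c n * of_nat n powr (- w)))
           \<le> (\<Sum>n. norm (c n) * real n powr (- \<sigma>1)) * real (Suc m) powr (\<sigma>1 - Re w)"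
    by (simp add: f_def g_def)
qed

lemma geo_decay:
  fixes q :: real
  assumes q: "0 < q" "q < 1" and f: "filterlim f at_top F"
  shows "((\<lambda>x. q powr f x) \<longlongrightarrow> 0) F"
proof -
  have "ln q < 0" using q by simp
  have "filterlim (\<lambda>x. ln q * f x) at_bot F"
    by (rule filterlim_tendsto_neg_mult_at_bot[OF tendsto_const \<open>ln q < 0\<close> f])
  hence "((\<lambda>x. exp (ln q * f x)) \<longlongrightarrow> 0) F"
    by (rule filterlim_compose[OF exp_at_bot])
  thus ?thesis using q by (simp add: powr_def mult.commute)
qed

lemma npow_cancel:
  assumes "n \<ge> 1"
  shows "(of_nat n :: complex) powr w * of_nat n powr (- w) = 1"
  using assms by (simp add: powr_add[symmetric])

lemma lead_general:
  fixes c :: "nat \<Rightarrow> complex"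
  assumes summ: "summable (\<lambda>n. norm (c n) * real n powr (- \<sigma>1))"
    and n: "n \<ge> 1"
    and w: "filterlim (\<lambda>x. Re (w x)) at_top F"
  shows "((\<lambda>x. of_nat n powr (w x) *
            ((\<Sum>k. c k * of_nat k powr (- w x)) - (\<Sum>k<n. c k * of_nat k powr (- w x)))) \<longlongrightarrow> c n) F"
proof -
  define S where "S = (\<Sum>n. norm (c n) * real n powr (- \<sigma>1))"
  have ev: "eventually (\<lambda>x. Re (w x) \<ge> \<sigma>1) F"
    using w by (simp add: filterlim_at_top)
  have bnd: "norm (of_nat n powr (w x) *
            ((\<Sum>k. c k * of_nat k powr (- w x)) - (\<Sum>k<n. c k * of_nat k powr (- w x))) - c n)
        \<le> S * real (Suc n) powr \<sigma>1 * (real n / real (Suc n)) powr Re (w x)"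
    if "Re (w x) \<ge> \<sigma>1" for x
  proof -
    let ?f = "\<lambda>k. c k * of_nat k powr (- w x)"
    have eq: "of_nat n powr (w x) * ((\<Sum>k. ?f k) - (\<Sum>k<n. ?f k)) - c n
        = of_nat n powr (w x) * ((\<Sum>k. ?f k) - (\<Sum>k\<le>n. ?f k))"
    proof -
      have "(\<Sum>k\<le>n. ?f k) = (\<Sum>k<n. ?f k) + ?f n" by (simp add: lessThan_Suc_atMost[symmetric])
      moreover have "of_nat n powr (w x) * ?f n = c n"
        using npow_cancel[OF n, of "w x"] by (simp add: mult.assoc mult.left_commute)
      ultimately show ?thesis by (simp add: algebra_simps)
    qed
    have "norm (of_nat n powr (w x) * ((\<Sum>k. ?f k) - (\<Sum>k\<le>n. ?f k)))
        \<le> real n powr Re (w x) * (S * real (Suc n) powr (\<sigma>1 - Re (w x)))"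
      unfolding norm_mult
      using tail_bound(2)[OF summ that, of n] norm_powr_real_powr[of "of_nat n :: complex" "w x"]
      by (auto simp: S_def intro!: mult_left_mono)
    also have "\<dots> = S * real (Suc n) powr \<sigma>1 * (real n / real (Suc n)) powr Re (w x)"
      using n by (simp add: powr_divide powr_diff field_simps)
    finally show ?thesis using eq by simp
  qed
  have lim0: "((\<lambda>x. S * real (Suc n) powr \<sigma>1 * (real n / real (Suc n)) powr Re (w x)) \<longlongrightarrow> 0) F"
    using geo_decay[OF _ _ w, of "real n / real (Suc n)"] n
    by (auto intro!: tendsto_mult_right_zero)
  show ?thesis
    by (rule LIM_zero_cancel, rule Lim_null_comparison[OF eventually_mono[OF ev bnd] lim0])
qed

lemma Aplus_summ0:
  assumes "a \<in> Aplus"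
  shows "(\<lambda>n. norm (a n) * real n powr (- 0)) = (\<lambda>n. norm (a n))"
  using assms by (auto simp: Aplus_def fun_eq_iff)

lemma lead_Aplus:
  assumes a: "a \<in> Aplus" and n: "n \<ge> 1"
    and w: "filterlim (\<lambda>x. Re (w x)) at_top F"
  shows "((\<lambda>x. of_nat n powr (w x) *
            (dirichlet_val a (w x) - (\<Sum>k<n. a k * of_nat k powr (- w x)))) \<longlongrightarrow> a n) F"
proof -
  have "summable (\<lambda>n. norm (a n) * real n powr (- 0))"
    using a by (simp only: Aplus_summ0[OF a]) (simp add: Aplus_def)
  from lead_general[OF this n w] show ?thesis by (simp add: dirichlet_val_def)
qed

lemma Aplus_diff: "a \<in> Aplus \<Longrightarrow> b \<in> Aplus \<Longrightarrow> (\<lambda>n. a n - b n) \<in> Aplus"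
  unfolding Aplus_def
  by (auto intro!: summable_comparison_test[where g="\<lambda>n. norm (a n) + norm (b n)"]
      summable_add norm_triangle_ineq4)

lemma Aplus_add: "a \<in> Aplus \<Longrightarrow> b \<in> Aplus \<Longrightarrow> (\<lambda>n. a n + b n) \<in> Aplus"
  unfolding Aplus_def
  by (auto intro!: summable_comparison_test[where g="\<lambda>n. norm (a n) + norm (b n)"]
      summable_add norm_triangle_ineq)

lemma Aplus_scale: "a \<in> Aplus \<Longrightarrow> (\<lambda>n. c * a n) \<in> Aplus"
  unfolding Aplus_def by (auto simp: norm_mult intro!: summable_mult)

lemma dirichlet_val_diff:
  assumes "a \<in> Aplus" "b \<in> Aplus" "Re s \<ge> 0"
  shows "dirichlet_val (\<lambda>n. a n - b n) s = dirichlet_val a s - dirichlet_val b s"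
  using sums_diff[OF dirichlet_val_sums[OF assms(1,3)] dirichlet_val_sums[OF assms(2,3)]]
  by (simp add: dirichlet_val_def sums_iff algebra_simps)

lemma dirichlet_val_add:
  assumes "a \<in> Aplus" "b \<in> Aplus" "Re s \<ge> 0"
  shows "dirichlet_val (\<lambda>n. a n + b n) s = dirichlet_val a s + dirichlet_val b s"
  using sums_add[OF dirichlet_val_sums[OF assms(1,3)] dirichlet_val_sums[OF assms(2,3)]]
  by (simp add: dirichlet_val_def sums_iff algebra_simps)

lemma dirichlet_val_scale:
  assumes "a \<in> Aplus" "Re s \<ge> 0"
  shows "dirichlet_val (\<lambda>n. c * a n) s = c * dirichlet_val a s"
  using sums_mult[OF dirichlet_val_sums[OF assms], of c]
  unfolding dirichlet_val_def by (simp add: mult.assoc sums_iff)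

lemma Aplus_zero_coeffs:
  assumes d: "d \<in> Aplus" and z: "\<forall>s\<in>halfplane 0. dirichlet_val d s = 0"
  shows "d n = 0"
proof (induction n rule: less_induct)
  case (less n)
  show ?case
  proof (cases "n = 0")
    case True then show ?thesis using d by (simp add: Aplus_def)
  next
    case False
    have w: "filterlim (\<lambda>x::real. Re (of_real x :: complex)) at_top at_top"
      by (simp add: filterlim_ident)
    have L: "((\<lambda>x::real. of_nat n powr (of_real x) *
            (dirichlet_val d (of_real x) - (\<Sum>k<n. d k * of_nat k powr (- of_real x)))) \<longlongrightarrow> d n) at_top"
      using lead_Aplus[OF d _ w] False by simp
    have "eventually (\<lambda>x::real. of_nat n powr (of_real x) *
            (dirichlet_val d (of_real x) - (\<Sum>k<n. d k * of_nat k powr (- of_real x))) = 0) at_top"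
      using eventually_gt_at_top[of 0]
    proof eventually_elim
      case (elim x)
      then have "dirichlet_val d (of_real x) = 0" using z by (auto simp: halfplane_def)
      moreover have "(\<Sum>k<n. d k * of_nat k powr (- of_real x)) = 0"
        using less.IH by simp
      ultimately show ?case by simp
    qed
    hence "((\<lambda>x::real. 0::complex) \<longlongrightarrow> d n) at_top"
      by (rule Lim_transform_eventually[OF L])
    thus ?thesis by (simp add: tendsto_const_iff)
  qed
qed

lemma Aplus_unique:
  assumes "a \<in> Aplus" "b \<in> Aplus" "\<forall>s\<in>halfplane 0. dirichlet_val a s = dirichlet_val b s"
  shows "a = b"
proof -
  have "(\<lambda>n. a n - b n) n = 0" for n
    by (rule Aplus_zero_coeffs[OF Aplus_diff[OF assms(1,2)]])
       (use assms in \<open>auto simp: dirichlet_val_diff halfplane_def\<close>)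
  thus ?thesis by auto
qed

lemma comp_op_char:
  assumes bounded: "\<forall>a\<in>Aplus. \<exists>b\<in>Aplus.
                    \<forall>s\<in>halfplane 0. dirichlet_val b s = dirichlet_val a (\<phi> s)"
    and a: "a \<in> Aplus"
  shows "comp_op \<phi> a \<in> Aplus \<and> (\<forall>s\<in>halfplane 0. dirichlet_val (comp_op \<phi> a) s = dirichlet_val a (\<phi> s))"
proof -
  have "\<exists>!b. b \<in> Aplus \<and> (\<forall>s\<in>halfplane 0. dirichlet_val b s = dirichlet_val a (\<phi> s))"
  proof -
    obtain b where b: "b \<in> Aplus" "\<forall>s\<in>halfplane 0. dirichlet_val b s = dirichlet_val a (\<phi> s)"
      using bounded a by blast
    show ?thesis
    proof (rule ex1I[of _ b])
      fix b' assume "b' \<in> Aplus \<and> (\<forall>s\<in>halfplane 0. dirichlet_val b' s = dirichlet_val a (\<phi> s))"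
      thus "b' = b" using b Aplus_unique[of b' b] by auto
    qed (use b in auto)
  qed
  thus ?thesis unfolding comp_op_def by (rule theI')
qed

lemma comp_op_eq:
  assumes "a \<in> Aplus" "b \<in> Aplus" "\<forall>s\<in>halfplane 0. dirichlet_val b s = dirichlet_val a (\<phi> s)"
  shows "comp_op \<phi> a = b"
proof -
  have "\<exists>!b. b \<in> Aplus \<and> (\<forall>s\<in>halfplane 0. dirichlet_val b s = dirichlet_val a (\<phi> s))"
  proof (rule ex1I[of _ b])
    fix b' assume "b' \<in> Aplus \<and> (\<forall>s\<in>halfplane 0. dirichlet_val b' s = dirichlet_val a (\<phi> s))"
    thus "b' = b" using assms Aplus_unique[of b' b] by auto
  qed (use assms in auto)
  thus ?thesis unfolding comp_op_def using assms by (intro the1_equality) auto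
qed

lemma one_le_mult_nat: "1 \<le> (b::nat) * k \<Longrightarrow> 1 \<le> b \<and> 1 \<le> k \<and> b * k div b = k"
proof -
  assume h: "1 \<le> b * k"
  hence "b \<noteq> 0" "k \<noteq> 0" by auto
  thus ?thesis by simp
qed

lemma regroup:
  fixes P :: "nat \<times> nat \<Rightarrow> 'a::{banach,uniform_topological_group_add}"
  assumes "(P has_sum X) ({1..} \<times> {1..})"
  shows "((\<lambda>n. \<Sum>d\<in>{d. d dvd n}. P (d, n div d)) has_sum X) {1..}"
proof -
  have bij: "bij_betw (\<lambda>(n,d). (d, n div d)) (Sigma {1::nat..} (\<lambda>n. {d. d dvd n})) ({1::nat..} \<times> {1::nat..})"
  proof (rule bij_betwI[where g="\<lambda>(i,j). (i*j, i)"])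
    show "(\<lambda>(n, d). (d, n div d)) \<in> Sigma {1::nat..} (\<lambda>n. {d. d dvd n}) \<rightarrow> {1::nat..} \<times> {1::nat..}"
    proof
      fix x :: "nat \<times> nat" assume "x \<in> Sigma {1::nat..} (\<lambda>n. {d. d dvd n})"
      then obtain n d :: nat where x: "x = (n,d)" "1 \<le> n" "d dvd n" by auto
      then obtain k where "n = d*k" by (auto elim: dvdE)
      with x one_le_mult_nat[of d k] show "(\<lambda>(n,d). (d, n div d)) x \<in> {1..} \<times> {1..}" by auto
    qed
    show "(\<lambda>(i, j). (i * j, i)) \<in> {1..} \<times> {1..} \<rightarrow> Sigma {1::nat..} (\<lambda>n. {d. d dvd n})"
      by auto
    show "(\<lambda>(i, j). (i * j, i)) ((\<lambda>(n, d). (d, n div d)) x) = x"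
      if "x \<in> Sigma {1::nat..} (\<lambda>n. {d. d dvd n})" for x
      using that by (auto elim!: dvdE)
    show "(\<lambda>(n, d). (d, n div d)) ((\<lambda>(i, j). (i * j, i)) y) = y" if "y \<in> {1..} \<times> {1..}" for y :: "nat \<times> nat"
      using that by auto
  qed
  have "((\<lambda>x. P ((\<lambda>(n,d). (d, n div d)) x)) has_sum X) (Sigma {1::nat..} (\<lambda>n. {d. d dvd n}))"
    using has_sum_reindex_bij_betw[OF bij, of P X] assms by simp
  hence h: "((\<lambda>(n,d). P (d, n div d)) has_sum X) (Sigma {1::nat..} (\<lambda>n. {d. d dvd n}))"
    by (simp add: case_prod_unfold)
  show ?thesis
  proof (rule has_sum_Sigma'[OF h])
    fix n :: nat assume "n \<in> {1..}"
    hence "finite {d. d dvd n}" by (intro finite_divisors_nat) auto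
    thus "((\<lambda>d. case (n, d) of (n, d) \<Rightarrow> P (d, n div d)) has_sum (\<Sum>d\<in>{d. d dvd n}. P (d, n div d))) {d. d dvd n}"
      by (simp add: has_sum_finite)
  qed
qed

lemma summable_on_from_norm:
  fixes f :: "nat \<Rightarrow> 'a::banach"
  assumes "summable (\<lambda>n. norm (f n))"
  shows "f summable_on A" "(\<lambda>n. norm (f n)) summable_on A"
proof -
  show "f summable_on A"
    by (rule summable_on_subset_banach[OF norm_summable_imp_summable_on[OF assms]]) auto
  have "summable (\<lambda>n. norm (norm (f n)))" using assms by simp
  show "(\<lambda>n. norm (f n)) summable_on A"
    by (rule summable_on_subset_banach[OF norm_summable_imp_summable_on[OF \<open>summable (\<lambda>n. norm (norm (f n)))\<close>]]) auto
qed

lemma pair_sums: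
  fixes \<alpha> \<beta> :: "nat \<Rightarrow> complex"
  assumes sa: "summable (\<lambda>n. norm (\<alpha> n))" and sb: "summable (\<lambda>n. norm (\<beta> n))"
    and a0: "\<alpha> 0 = 0" and b0: "\<beta> 0 = 0"
  shows "(\<lambda>n. \<Sum>d\<in>{d. d dvd n}. \<alpha> d * \<beta> (n div d)) sums (suminf \<alpha> * suminf \<beta>)"
proof -
  have hA: "(\<alpha> has_sum suminf \<alpha>) {1..}"
  proof -
    have "(\<alpha> has_sum suminf \<alpha>) UNIV"
      by (rule norm_summable_imp_has_sum[OF sa]) (use sa summable_norm_cancel summable_sums in blast)
    thus ?thesis by (subst has_sum_cong_neutral[where g=\<alpha> and T=UNIV]) (use a0 in \<open>auto simp: not_le\<close>)
  qed
  have hB: "(\<beta> has_sum suminf \<beta>) {1..}"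
  proof -
    have "(\<beta> has_sum suminf \<beta>) UNIV"
      by (rule norm_summable_imp_has_sum[OF sb]) (use sb summable_norm_cancel summable_sums in blast)
    thus ?thesis by (subst has_sum_cong_neutral[where g=\<beta> and T=UNIV]) (use b0 in \<open>auto simp: not_le\<close>)
  qed
  have summ: "(\<lambda>(i,j). \<alpha> i * \<beta> j) summable_on ({1..} \<times> {1..})"
  proof (rule abs_summable_summable)
    have nb: "(\<lambda>j. norm (\<beta> j)) summable_on {1..}" using summable_on_from_norm(2)[OF sb] .
    have na: "(\<lambda>j. norm (\<alpha> j)) summable_on {1..}" using summable_on_from_norm(2)[OF sa] .
    define C where "C = infsum (\<lambda>j. norm (\<beta> j)) {1..}"
    have C0: "C \<ge> 0" unfolding C_def by (rule infsum_nonneg) auto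
    show "(\<lambda>x. norm ((\<lambda>(i,j). \<alpha> i * \<beta> j) x)) summable_on ({1..} \<times> {1..})"
    proof (rule iffD2[OF Infinite_Sum.abs_summable_on_Sigma_iff], intro conjI ballI)
      fix i :: nat
      show "(\<lambda>j. norm (case (i, j) of (i, j) \<Rightarrow> \<alpha> i * \<beta> j)) summable_on {1..}"
        using summable_on_cmult_right[OF nb, of "norm (\<alpha> i)"] by (simp add: norm_mult)
    next
      have eq: "infsum (\<lambda>j. norm (case (i, j) of (i, j) \<Rightarrow> \<alpha> i * \<beta> j)) {1..} = norm (\<alpha> i) * C" for i :: nat
        using infsum_cmult_right[OF nb, of "norm (\<alpha> i)"] by (simp add: norm_mult C_def)
      show "(\<lambda>i. norm (infsum (\<lambda>j. norm (case (i, j) of (i, j) \<Rightarrow> \<alpha> i * \<beta> j)) {1..})) summable_on {1..}"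
        unfolding eq using summable_on_cmult_left[OF na, of C] C0 by (simp add: norm_mult)
    qed
  qed
  have hP: "((\<lambda>(i,j). \<alpha> i * \<beta> j) has_sum (suminf \<alpha> * suminf \<beta>)) ({1..} \<times> {1..})"
  proof (rule has_sum_SigmaI[where g="\<lambda>i. \<alpha> i * suminf \<beta>"])
    show "((\<lambda>j. case (i, j) of (i, j) \<Rightarrow> \<alpha> i * \<beta> j) has_sum \<alpha> i * suminf \<beta>) {1..}" for i
      using has_sum_cmult_right[OF hB, of "\<alpha> i"] by simp
    show "((\<lambda>i. \<alpha> i * suminf \<beta>) has_sum suminf \<alpha> * suminf \<beta>) {1..}"
      by (rule has_sum_cmult_left[OF hA])
  qed (use summ in auto)
  have "((\<lambda>n. \<Sum>d\<in>{d. d dvd n}. (\<lambda>(i,j). \<alpha> i * \<beta> j) (d, n div d)) has_sum (suminf \<alpha> * suminf \<beta>)) {1..}"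
    by (rule regroup[OF hP])
  hence "((\<lambda>n. \<Sum>d\<in>{d. d dvd n}. \<alpha> d * \<beta> (n div d)) has_sum (suminf \<alpha> * suminf \<beta>)) UNIV"
    by (subst (asm) has_sum_cong_neutral[where T=UNIV and g="\<lambda>n. \<Sum>d\<in>{d. d dvd n}. \<alpha> d * \<beta> (n div d)"])
       (auto simp: not_le)
  thus ?thesis by (rule has_sum_imp_sums)
qed

lemma dconv_0 [simp]: "dconv a b 0 = 0"
  unfolding dconv_def by simp

lemma npow_mult_div:
  assumes "(d::nat) dvd n"
  shows "(of_nat d :: complex) powr z * of_nat (n div d) powr z = of_nat n powr z"
proof -
  have "n = d * (n div d)" using assms by simp
  hence "(of_nat n :: complex) = of_nat d * of_nat (n div d)" by (metis of_nat_mult)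
  thus ?thesis by (simp add: powr_times_real)
qed

lemma dconv_Aplus:
  assumes a: "a \<in> Aplus" and b: "b \<in> Aplus"
  shows "dconv a b \<in> Aplus"
proof -
  let ?\<alpha> = "\<lambda>n. complex_of_real (norm (a n))" and ?\<beta> = "\<lambda>n. complex_of_real (norm (b n))"
  have "(\<lambda>n. \<Sum>d\<in>{d. d dvd n}. ?\<alpha> d * ?\<beta> (n div d)) sums (suminf ?\<alpha> * suminf ?\<beta>)"
    by (rule pair_sums) (use a b in \<open>auto simp: Aplus_def\<close>)
  hence "summable (\<lambda>n. \<Sum>d\<in>{d. d dvd n}. ?\<alpha> d * ?\<beta> (n div d))" by (rule sums_summable)
  hence "summable (\<lambda>n. complex_of_real (\<Sum>d\<in>{d. d dvd n}. norm (a d) * norm (b (n div d))))"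
    by simp
  hence s: "summable (\<lambda>n. (\<Sum>d\<in>{d. d dvd n}. norm (a d) * norm (b (n div d))))"
    by (simp only: summable_complex_of_real)
  have "summable (\<lambda>n. norm (dconv a b n))"
  proof (rule summable_comparison_test[OF _ s])
    show "\<exists>N. \<forall>n\<ge>N. norm (norm (dconv a b n)) \<le> (\<Sum>d\<in>{d. d dvd n}. norm (a d) * norm (b (n div d)))"
      unfolding dconv_def using norm_sum by (auto simp: norm_mult intro!: exI[of _ 0] order_trans[OF norm_sum])
  qed
  thus ?thesis by (simp add: Aplus_def)
qed

lemma dconv_val:
  assumes a: "a \<in> Aplus" and b: "b \<in> Aplus" and s: "Re s \<ge> 0"
  shows "dirichlet_val (dconv a b) s = dirichlet_val a s * dirichlet_val b s"
proof -
  let ?\<alpha> = "\<lambda>n. a n * of_nat n powr (- s)" and ?\<beta> = "\<lambda>n. b n * of_nat n powr (- s)"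
  have "(\<lambda>n. \<Sum>d\<in>{d. d dvd n}. ?\<alpha> d * ?\<beta> (n div d)) sums (suminf ?\<alpha> * suminf ?\<beta>)"
    by (rule pair_sums) (use Aplus_summable[OF a s] Aplus_summable[OF b s] in auto)
  moreover have "(\<Sum>d\<in>{d. d dvd n}. ?\<alpha> d * ?\<beta> (n div d)) = dconv a b n * of_nat n powr (- s)" for n
  proof (cases "n = 0")
    case True then show ?thesis by (simp add: dconv_def)
  next
    case False
    have "(\<Sum>d\<in>{d. d dvd n}. ?\<alpha> d * ?\<beta> (n div d)) = (\<Sum>d\<in>{d. d dvd n}. a d * b (n div d) * of_nat n powr (- s))"
    proof (rule sum.cong[OF refl])
      fix d assume "d \<in> {d. d dvd n}"
      hence "(of_nat d :: complex) powr (-s) * of_nat (n div d) powr (-s) = of_nat n powr (-s)"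
        by (intro npow_mult_div) auto
      thus "?\<alpha> d * ?\<beta> (n div d) = a d * b (n div d) * of_nat n powr (- s)"
        by (simp add: algebra_simps)
    qed
    thus ?thesis by (simp add: dconv_def sum_distrib_right)
  qed
  ultimately have "(\<lambda>n. dconv a b n * of_nat n powr (- s)) sums (dirichlet_val a s * dirichlet_val b s)"
    by (simp add: dirichlet_val_def)
  thus ?thesis by (simp add: dirichlet_val_def sums_iff)
qed

definition vshift :: "real \<Rightarrow> (nat \<Rightarrow> complex) \<Rightarrow> nat \<Rightarrow> complex" where
  "vshift \<tau> a = (\<lambda>n. a n * of_nat n powr (- (\<i> * of_real \<tau>)))"

lemma vshift_Aplus: "a \<in> Aplus \<Longrightarrow> vshift \<tau> a \<in> Aplus"
proof -
  assume a: "a \<in> Aplus"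
  have le: "norm (vshift \<tau> a n) \<le> norm (a n)" for n
    using norm_npow_le1[of "\<i> * of_real \<tau>" n] by (auto simp: vshift_def norm_mult intro!: mult_left_le)
  have "summable (\<lambda>n. norm (vshift \<tau> a n))"
    by (rule summable_comparison_test[OF _ conjunct2[OF a[unfolded Aplus_def, simplified]]])
       (use le in auto)
  thus ?thesis using a by (simp add: Aplus_def vshift_def)
qed

lemma vshift_val:
  assumes "a \<in> Aplus" "Re s \<ge> 0"
  shows "dirichlet_val (vshift \<tau> a) s = dirichlet_val a (s + \<i> * of_real \<tau>)"
proof -
  have eq: "a n * of_nat n powr (- (\<i> * of_real \<tau>)) * of_nat n powr (- s) = a n * of_nat n powr (- (s + \<i> * of_real \<tau>))" for n
    by (simp add: mult.assoc powr_add[symmetric] algebra_simps)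
  show ?thesis by (simp only: dirichlet_val_def vshift_def eq)
qed

lemma vshift_inv: "a \<in> Aplus \<Longrightarrow> vshift (- \<tau>) (vshift \<tau> a) = a"
proof -
  assume a: "a \<in> Aplus"
  have eq: "a n * of_nat n powr (- (\<i> * of_real \<tau>)) * of_nat n powr (- (\<i> * of_real (-\<tau>))) = a n" for n
  proof (cases "n = 0")
    case True then show ?thesis using a by (simp add: Aplus_def)
  next
    case False
    have "(of_nat n :: complex) powr (- (\<i> * of_real \<tau>)) * of_nat n powr (- (\<i> * of_real (-\<tau>))) = 1"
      using False by (simp add: powr_add[symmetric])
    thus ?thesis by (simp add: mult.assoc)
  qed
  show ?thesis
  proof
    fix n show "vshift (- \<tau>) (vshift \<tau> a) n = a n" using eq[of n] by (simp only: vshift_def)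
  qed
qed

lemma vshift_dconv: "vshift \<tau> (dconv a b) = dconv (vshift \<tau> a) (vshift \<tau> b)"
proof
  fix n
  show "vshift \<tau> (dconv a b) n = dconv (vshift \<tau> a) (vshift \<tau> b) n"
  proof (cases "n = 0")
    case True then show ?thesis by (simp add: vshift_def)
  next
    case False
    have eq: "a d * b (n div d) * of_nat n powr (- (\<i> * of_real \<tau>))
        = a d * of_nat d powr (- (\<i> * of_real \<tau>)) * (b (n div d) * of_nat (n div d) powr (- (\<i> * of_real \<tau>)))"
      if "d dvd n" for d
      using npow_mult_div[OF that, of "- (\<i> * of_real \<tau>)"] by (simp add: algebra_simps)
    have "vshift \<tau> (dconv a b) n = (\<Sum>d\<in>{d. d dvd n}. a d * b (n div d) * of_nat n powr (- (\<i> * of_real \<tau>)))"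
      by (simp add: vshift_def dconv_def sum_distrib_right)
    also have "\<dots> = dconv (vshift \<tau> a) (vshift \<tau> b) n"
      unfolding dconv_def vshift_def by (rule sum.cong[OF refl]) (use eq in auto)
    finally show ?thesis .
  qed
qed

lemma vshift_dunit: "vshift \<tau> dunit = dunit"
  by (auto simp: vshift_def dunit_def fun_eq_iff)

lemma dunit_Aplus: "dunit \<in> Aplus"
proof -
  have "summable (\<lambda>n. norm (dunit n))"
    by (rule summable_finite[of "{1}"]) (auto simp: dunit_def)
  thus ?thesis by (simp add: Aplus_def dunit_def)
qed

lemma if_direction:
  assumes bounded: "\<forall>a\<in>Aplus. \<exists>b\<in>Aplus.
                    \<forall>s\<in>halfplane 0. dirichlet_val b s = dirichlet_val a (\<phi> s)"
    and tr: "\<forall>s\<in>halfplane 0. \<phi> s = s + \<i> * of_real \<tau>"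
  shows "Aplus_automorphism (comp_op \<phi>)"
proof -
  have C: "comp_op \<phi> a = vshift \<tau> a" if "a \<in> Aplus" for a
    by (rule comp_op_eq[OF that vshift_Aplus[OF that]])
       (use that tr in \<open>auto simp: vshift_val halfplane_def\<close>)
  have bij: "bij_betw (vshift \<tau>) Aplus Aplus"
    by (rule bij_betwI[where g="vshift (-\<tau>)"]) (auto simp: vshift_Aplus vshift_inv dest: vshift_inv[of _ "-\<tau>"])
  show ?thesis
    unfolding Aplus_automorphism_def
  proof (intro conjI ballI allI)
    show "bij_betw (comp_op \<phi>) Aplus Aplus"
      using bij by (rule bij_betw_cong[THEN iffD2, rotated]) (simp add: C)
    show "comp_op \<phi> (\<lambda>n. a n + b n) = (\<lambda>n. comp_op \<phi> a n + comp_op \<phi> b n)" if "a \<in> Aplus" "b \<in> Aplus" for a b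
      using that by (simp add: C Aplus_add) (simp add: vshift_def algebra_simps)
    show "comp_op \<phi> (\<lambda>n. c * a n) = (\<lambda>n. c * comp_op \<phi> a n)" if "a \<in> Aplus" for c a
      using that by (simp add: C Aplus_scale) (simp add: vshift_def algebra_simps)
    show "comp_op \<phi> (dconv a b) = dconv (comp_op \<phi> a) (comp_op \<phi> b)" if "a \<in> Aplus" "b \<in> Aplus" for a b
      using that by (simp add: C dconv_Aplus vshift_dconv)
    show "comp_op \<phi> dunit = dunit"
      by (simp add: C dunit_Aplus vshift_dunit)
  qed
qed

lemma open_halfplane: "open (halfplane \<theta>)"
  unfolding halfplane_def by (simp add: open_halfspace_Re_gt)

lemma convex_halfplane: "convex (halfplane \<theta>)"
  unfolding halfplane_def by (simp add: convex_halfspace_Re_gt)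

lemma dirichlet_holo:
  assumes a: "a \<in> Aplus"
  shows "dirichlet_val a holomorphic_on halfplane 0"
proof -
  let ?A = "{w::complex. Re w \<ge> 0}"
  have ul: "uniform_limit ?A (\<lambda>N w. \<Sum>i<N. a i * of_nat i powr (- w)) (\<lambda>w. \<Sum>i. a i * of_nat i powr (- w)) sequentially"
  proof (rule Weierstrass_m_test)
    show "norm (a n * of_nat n powr (- w)) \<le> norm (a n)" if "w \<in> ?A" for n w
      using norm_npow_le1[of w n] that by (auto simp: norm_mult intro!: mult_left_le)
    show "summable (\<lambda>n. norm (a n))" using a by (simp add: Aplus_def)
  qed
  have "\<exists>f'. DERIV (dirichlet_val a) z :> f'" if z: "z \<in> halfplane 0" for z
  proof -
    define r where "r = Re z / 2"
    have r: "r > 0" using z by (simp add: r_def halfplane_def)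
    have sub: "cball z r \<subseteq> ?A"
    proof
      fix w assume "w \<in> cball z r"
      hence "norm (z - w) \<le> r" by (simp add: dist_norm)
      hence "Re z - Re w \<le> r" using complex_Re_le_cmod[of "z - w"] by simp
      thus "w \<in> ?A" using r by (simp add: r_def)
    qed
    have ul2: "uniform_limit (cball z r) (\<lambda>N w. \<Sum>i<N. a i * of_nat i powr (- w)) (dirichlet_val a) sequentially"
      unfolding dirichlet_val_def[abs_def] by (rule uniform_limit_on_subset[OF ul sub])
    have hol: "eventually (\<lambda>N. continuous_on (cball z r) (\<lambda>w. \<Sum>i<N. a i * of_nat i powr (- w)) \<and>
          (\<lambda>w. \<Sum>i<N. a i * of_nat i powr (- w)) holomorphic_on ball z r) sequentially"
      by (intro always_eventually allI conjI holomorphic_on_imp_continuous_on holomorphic_intros)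
    obtain "dirichlet_val a holomorphic_on ball z r"
      using holomorphic_uniform_limit[OF hol ul2] by auto
    thus ?thesis using r
      by (meson centre_in_ball field_differentiable_def holomorphic_on_imp_differentiable_at open_ball)
  qed
  thus ?thesis by (simp add: holomorphic_on_open open_halfplane)
qed

lemma geo_avg_0:
  fixes z :: complex
  assumes "norm z = 1" "z \<noteq> 1"
  shows "(\<lambda>K. (\<Sum>j<K. z ^ j) / of_nat K) \<longlonglongrightarrow> 0"
proof (rule Lim_null_comparison)
  have "norm ((\<Sum>j<K. z ^ j) / of_nat K) \<le> (2 / norm (z - 1)) / real K" for K
  proof -
    have "norm (\<Sum>j<K. z ^ j) = norm (z ^ K - 1) / norm (z - 1)"
      using assms by (simp add: geometric_sum norm_divide)
    also have "norm (z ^ K - 1) \<le> 2"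
      using norm_triangle_ineq4[of "z ^ K" 1] assms by (simp add: norm_power)
    hence "norm (z ^ K - 1) / norm (z - 1) \<le> 2 / norm (z - 1)"
      by (intro divide_right_mono) auto
    finally have "norm (\<Sum>j<K. z ^ j) / real K \<le> (2 / norm (z - 1)) / real K"
      by (intro divide_right_mono) auto
    thus ?thesis by (simp add: norm_divide)
  qed
  thus "eventually (\<lambda>K. norm ((\<Sum>j<K. z ^ j) / of_nat K) \<le> (2 / norm (z - 1)) / real K) sequentially"
    by simp
  show "(\<lambda>K. (2 / norm (z - 1)) / real K) \<longlonglongrightarrow> 0" by (rule lim_const_over_n)
qed

lemma trig_mean:
  fixes \<alpha> :: "nat \<Rightarrow> complex" and lam :: "nat \<Rightarrow> real"
  assumes fin: "finite I"
    and sep: "\<And>m n. m \<in> I \<Longrightarrow> n \<in> I \<Longrightarrow> m \<noteq> n \<Longrightarrow> exp (\<i> * of_real (\<delta> * (lam m - lam n))) \<noteq> 1"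
    and bnd: "\<And>j::nat. norm (\<Sum>n\<in>I. \<alpha> n * exp (\<i> * of_real (real j * \<delta> * lam n))) \<le> B"
  shows "(\<Sum>n\<in>I. norm (\<alpha> n) ^ 2) \<le> B ^ 2"
proof -
  define P where "P j = (\<Sum>n\<in>I. \<alpha> n * exp (\<i> * of_real (real j * \<delta> * lam n)))" for j :: nat
  define z where "z m n = exp (\<i> * of_real (\<delta> * (lam m - lam n)))" for m n
  have B0: "B \<ge> 0" using bnd[of 0] norm_ge_zero order_trans by blast
  have sq: "complex_of_real (norm (P j) ^ 2) = (\<Sum>m\<in>I. \<Sum>n\<in>I. \<alpha> m * cnj (\<alpha> n) * z m n ^ j)" for j
  proof -
    have "complex_of_real (norm (P j) ^ 2) = P j * cnj (P j)" by (rule complex_norm_square)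
    also have "\<dots> = (\<Sum>m\<in>I. \<Sum>n\<in>I. (\<alpha> m * exp (\<i> * of_real (real j * \<delta> * lam m))) *
                     cnj (\<alpha> n * exp (\<i> * of_real (real j * \<delta> * lam n))))"
      unfolding P_def cnj_sum by (rule sum_product)
    also have "\<dots> = (\<Sum>m\<in>I. \<Sum>n\<in>I. \<alpha> m * cnj (\<alpha> n) * z m n ^ j)"
    proof (intro sum.cong refl)
      fix m n
      have "exp (\<i> * of_real (real j * \<delta> * lam m)) * cnj (exp (\<i> * of_real (real j * \<delta> * lam n)))
          = exp (of_nat j * (\<i> * of_real (\<delta> * (lam m - lam n))))"
        by (simp add: exp_cnj exp_add[symmetric] algebra_simps)
      also have "\<dots> = z m n ^ j" by (simp add: z_def exp_of_nat_mult)
      finally show "\<alpha> m * exp (\<i> * of_real (real j * \<delta> * lam m)) * cnj (\<alpha> n * exp (\<i> * of_real (real j * \<delta> * lam n)))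
          = \<alpha> m * cnj (\<alpha> n) * z m n ^ j" by (simp add: algebra_simps)
    qed
    finally show ?thesis .
  qed
  define avg where "avg K = (\<Sum>j<K. complex_of_real (norm (P j) ^ 2)) / of_nat K" for K
  have avg_eq: "avg K = (\<Sum>m\<in>I. \<Sum>n\<in>I. \<alpha> m * cnj (\<alpha> n) * ((\<Sum>j<K. z m n ^ j) / of_nat K))" for K
    unfolding avg_def sq by (simp add: sum.swap[of _ "{..<K}"] sum_divide_distrib sum_distrib_left times_divide_eq_right)
  have lim: "avg \<longlonglongrightarrow> (\<Sum>m\<in>I. \<Sum>n\<in>I. \<alpha> m * cnj (\<alpha> n) * (if m = n then 1 else 0))"
    unfolding avg_eq[abs_def]
  proof (intro tendsto_sum tendsto_mult tendsto_const)
    fix m n assume mn: "m \<in> I" "n \<in> I"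
    show "(\<lambda>K. (\<Sum>j<K. z m n ^ j) / of_nat K) \<longlonglongrightarrow> (if m = n then 1 else 0)"
    proof (cases "m = n")
      case True
      have z1: "z m n = 1" using True by (simp add: z_def)
      have "eventually (\<lambda>K. 1 = (\<Sum>j<K. z m n ^ j) / of_nat K) sequentially"
        using eventually_gt_at_top[of "0::nat"] by eventually_elim (simp add: z1)
      thus ?thesis using True by (simp add: tendsto_eventually Lim_transform_eventually[OF tendsto_const])
    next
      case False
      have "norm (z m n) = 1" by (simp add: z_def)
      thus ?thesis using False sep[OF mn False] by (simp add: z_def geo_avg_0)
    qed
  qed
  have limv: "(\<Sum>m\<in>I. \<Sum>n\<in>I. \<alpha> m * cnj (\<alpha> n) * (if m = n then 1 else 0)) = complex_of_real (\<Sum>m\<in>I. norm (\<alpha> m) ^ 2)"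
  proof -
    have "(\<Sum>m\<in>I. \<Sum>n\<in>I. \<alpha> m * cnj (\<alpha> n) * (if m = n then 1 else 0)) = (\<Sum>m\<in>I. \<alpha> m * cnj (\<alpha> m))"
      using fin by (simp add: if_distrib cong: if_cong)
    also have "\<dots> = (\<Sum>m\<in>I. complex_of_real (norm (\<alpha> m) ^ 2))"
      by (rule sum.cong[OF refl]) (simp only: complex_norm_square)
    finally show ?thesis by simp
  qed
  have limR: "(\<lambda>K. Re (avg K)) \<longlonglongrightarrow> (\<Sum>m\<in>I. norm (\<alpha> m) ^ 2)"
    using tendsto_Re[OF lim] unfolding limv by simp
  have le: "Re (avg K) \<le> B ^ 2" if "K \<ge> 1" for K
  proof -
    have "Re (avg K) = (\<Sum>j<K. norm (P j) ^ 2) / real K" by (simp add: avg_def Re_divide_of_nat)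
    also have "(\<Sum>j<K. norm (P j) ^ 2) \<le> (\<Sum>j<K. B ^ 2)"
      by (intro sum_mono power_mono) (auto simp only: P_def bnd norm_ge_zero)
    hence "(\<Sum>j<K. norm (P j) ^ 2) / real K \<le> (\<Sum>j<K. B ^ 2) / real K"
      by (intro divide_right_mono) auto
    also have "\<dots> = B ^ 2" using that by simp
    finally show ?thesis .
  qed
  show ?thesis by (rule LIMSEQ_le_const2[OF limR]) (use le in auto)
qed

lemma exp_i_ne_1:
  fixes x :: real
  assumes "x \<noteq> 0" "\<bar>x\<bar> < 2 * pi"
  shows "exp (\<i> * of_real x) \<noteq> 1"
proof
  assume "exp (\<i> * of_real x) = 1"
  then obtain k :: int where k: "x = of_int (2 * k) * pi" by (auto simp: exp_eq_1)
  with assms have "k \<noteq> 0" by auto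
  hence "\<bar>real_of_int k\<bar> \<ge> 1" by linarith
  hence "\<bar>x\<bar> \<ge> 2 * pi" using k by (simp add: abs_mult)
  with assms show False by simp
qed

lemma npow_split:
  assumes "n \<ge> 1"
  shows "(of_nat n :: complex) powr (- (of_real \<sigma> + \<i> * of_real t))
       = of_nat n powr (- of_real \<sigma>) * exp (\<i> * of_real (t * (- ln (real n))))"
proof -
  have "(of_nat n :: complex) powr (- (of_real \<sigma> + \<i> * of_real t))
      = of_nat n powr (- of_real \<sigma>) * of_nat n powr (- (\<i> * of_real t))"
    by (simp add: powr_add[symmetric])
  also have "(of_nat n :: complex) powr (- (\<i> * of_real t)) = exp (\<i> * of_real (t * (- ln (real n))))"
    using assms by (simp add: powr_def algebra_simps)
  finally show ?thesis .
qed

lemma parseval_sigma: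
  assumes a: "a \<in> Aplus" and bd: "\<forall>s\<in>halfplane 0. norm (dirichlet_val a s) \<le> 1"
    and \<sigma>: "\<sigma> > 0" and N: "N \<ge> 1"
  shows "(\<Sum>n\<in>{1..N}. norm (a n * of_nat n powr (- of_real \<sigma>)) ^ 2)
          \<le> (1 + (\<Sum>n. norm (a n)) * real (Suc N) powr (- \<sigma>)) ^ 2"
proof (rule trig_mean[where lam="\<lambda>n. - ln (real n)" and \<delta>="1 / (ln (real N) + 1)"])
  define \<delta> where "\<delta> = 1 / (ln (real N) + 1)"
  have lnN: "ln (real N) \<ge> 0" using N by simp
  have \<delta>: "\<delta> > 0" "\<delta> * ln (real N) < 1" using lnN by (auto simp: \<delta>_def field_simps)
  show "finite {1..N}" by simp
  fix m n assume mn: "m \<in> {1..N}" "n \<in> {1..N}" "m \<noteq> n"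
  have "ln (real m) \<noteq> ln (real n)" using mn by simp
  moreover have "\<bar>ln (real n) - ln (real m)\<bar> \<le> ln (real N)"
  proof -
    have "ln (real m) \<le> ln (real N)" "ln (real n) \<le> ln (real N)" "0 \<le> ln (real m)" "0 \<le> ln (real n)"
      using mn by auto
    thus ?thesis by linarith
  qed
  ultimately have "\<delta> * (ln (real n) - ln (real m)) \<noteq> 0"
    "\<bar>\<delta> * (ln (real n) - ln (real m))\<bar> < 2 * pi"
  proof -
    show "\<delta> * (ln (real n) - ln (real m)) \<noteq> 0" using \<delta> \<open>ln (real m) \<noteq> ln (real n)\<close> by simp
    have "\<bar>\<delta> * (ln (real n) - ln (real m))\<bar> \<le> \<delta> * ln (real N)"
      using \<delta> \<open>\<bar>ln (real n) - ln (real m)\<bar> \<le> ln (real N)\<close> by (simp add: abs_mult mult_left_mono)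
    also have "\<dots> < 2 * pi" using \<delta> pi_gt3 by linarith
    finally show "\<bar>\<delta> * (ln (real n) - ln (real m))\<bar> < 2 * pi" .
  qed
  thus "exp (\<i> * of_real (1 / (ln (real N) + 1) * (- ln (real m) - - ln (real n)))) \<noteq> 1"
    by (intro exp_i_ne_1) (auto simp: \<delta>_def algebra_simps)
next
  fix j :: nat
  define t where "t = real j * (1 / (ln (real N) + 1))"
  define w where "w = of_real \<sigma> + \<i> * of_real t"
  have w: "Re w \<ge> 0" "w \<in> halfplane 0" using \<sigma> by (auto simp: w_def halfplane_def)
  have eq: "(\<Sum>n\<in>{1..N}. a n * of_nat n powr (- of_real \<sigma>) * exp (\<i> * of_real (real j * (1 / (ln (real N) + 1)) * - ln (real n))))
      = (\<Sum>n\<le>N. a n * of_nat n powr (- w))"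
  proof -
    have "(\<Sum>n\<le>N. a n * of_nat n powr (- w)) = (\<Sum>n\<in>{1..N}. a n * of_nat n powr (- w))"
      by (rule sum.mono_neutral_right) (auto simp: not_le)
    also have "\<dots> = (\<Sum>n\<in>{1..N}. a n * of_nat n powr (- of_real \<sigma>) * exp (\<i> * of_real (real j * (1 / (ln (real N) + 1)) * - ln (real n))))"
    proof (rule sum.cong[OF refl])
      fix n assume "n \<in> {1..N}"
      hence "(of_nat n :: complex) powr (- w) = of_nat n powr (- of_real \<sigma>) * exp (\<i> * of_real (t * (- ln (real n))))"
        unfolding w_def by (intro npow_split) auto
      thus "a n * of_nat n powr (- w) = a n * of_nat n powr (- of_real \<sigma>) * exp (\<i> * of_real (real j * (1 / (ln (real N) + 1)) * - ln (real n)))"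
        by (simp only: t_def mult.assoc)
    qed
    finally show ?thesis by simp
  qed
  have summ: "summable (\<lambda>n. norm (a n) * real n powr (- 0))"
    using a by (simp only: Aplus_summ0[OF a]) (simp add: Aplus_def)
  have "norm (\<Sum>n\<le>N. a n * of_nat n powr (- w))
      \<le> norm (dirichlet_val a w) + norm (dirichlet_val a w - (\<Sum>n\<le>N. a n * of_nat n powr (- w)))"
    by (smt (verit) norm_minus_commute norm_triangle_sub)
  also have "norm (dirichlet_val a w - (\<Sum>n\<le>N. a n * of_nat n powr (- w))) \<le> (\<Sum>n. norm (a n)) * real (Suc N) powr (- \<sigma>)"
  proof -
    have tb: "norm ((\<Sum>n. a n * of_nat n powr (- w)) - (\<Sum>n\<le>N. a n * of_nat n powr (- w)))
        \<le> (\<Sum>n. norm (a n) * real n powr (- 0)) * real (Suc N) powr (0 - Re w)"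
      by (rule tail_bound(2)[OF summ w(1)])
    have "Re w = \<sigma>" by (simp add: w_def)
    with tb show ?thesis unfolding Aplus_summ0[OF a] dirichlet_val_def by simp
  qed
  also have "norm (dirichlet_val a w) \<le> 1" using bd w by auto
  finally show "norm (\<Sum>n\<in>{1..N}. a n * of_nat n powr (- of_real \<sigma>) * exp (\<i> * of_real (real j * (1 / (ln (real N) + 1)) * - ln (real n))))
        \<le> 1 + (\<Sum>n. norm (a n)) * real (Suc N) powr (- \<sigma>)"
    unfolding eq by simp
qed

lemma parseval:
  assumes a: "a \<in> Aplus" and bd: "\<forall>s\<in>halfplane 0. norm (dirichlet_val a s) \<le> 1"
    and F: "finite F"
  shows "(\<Sum>n\<in>F. norm (a n) ^ 2) \<le> 1"
proof -
  define F' where "F' = F - {0}"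
  define N0 where "N0 = Max (insert 1 F')"
  have F'N0: "F' \<subseteq> {1..N0}" using F by (auto simp: F'_def N0_def)
  have N0: "N0 \<ge> 1" unfolding N0_def by (rule Max_ge) (use F in \<open>auto simp: F'_def\<close>)
  have sF: "(\<Sum>n\<in>F. norm (a n) ^ 2) = (\<Sum>n\<in>F'. norm (a n) ^ 2)"
    using a F by (auto simp: F'_def Aplus_def intro!: sum.mono_neutral_right)
  define S where "S = (\<Sum>n. norm (a n))"
  have step1: "(\<Sum>n\<in>F'. norm (a n * of_nat n powr (- of_real \<sigma>)) ^ 2) \<le> 1" if \<sigma>: "\<sigma> > 0" for \<sigma>
  proof (rule LIMSEQ_le_const[where X="\<lambda>N. (1 + S * real (Suc N) powr (- \<sigma>)) ^ 2"])
    have "(\<lambda>N. real (Suc N) powr (- \<sigma>)) \<longlonglongrightarrow> 0"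
      by (rule tendsto_neg_powr) (use \<sigma> filterlim_compose[OF filterlim_real_sequentially filterlim_Suc] in auto)
    hence "(\<lambda>N. (1 + S * real (Suc N) powr (- \<sigma>)) ^ 2) \<longlonglongrightarrow> (1 + S * 0) ^ 2"
      by (intro tendsto_intros)
    thus "(\<lambda>N. (1 + S * real (Suc N) powr (- \<sigma>)) ^ 2) \<longlonglongrightarrow> 1" by simp
    show "\<exists>N. \<forall>n\<ge>N. (\<Sum>n\<in>F'. norm (a n * of_nat n powr (- of_real \<sigma>)) ^ 2) \<le> (1 + S * real (Suc n) powr (- \<sigma>)) ^ 2"
    proof (intro exI[of _ N0] allI impI)
      fix n assume n: "n \<ge> N0"
      have "(\<Sum>n\<in>F'. norm (a n * of_nat n powr (- of_real \<sigma>)) ^ 2) \<le> (\<Sum>k\<in>{1..n}. norm (a k * of_nat k powr (- of_real \<sigma>)) ^ 2)"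
        by (rule sum_mono2) (use F'N0 n in auto)
      also have "\<dots> \<le> (1 + S * real (Suc n) powr (- \<sigma>)) ^ 2"
        unfolding S_def by (rule parseval_sigma[OF a bd \<sigma>]) (use n N0 in auto)
      finally show "(\<Sum>n\<in>F'. norm (a n * of_nat n powr (- of_real \<sigma>)) ^ 2) \<le> (1 + S * real (Suc n) powr (- \<sigma>)) ^ 2" .
    qed
  qed
  have lim: "(\<lambda>j. \<Sum>n\<in>F'. norm (a n * of_nat n powr (- of_real (1 / real (Suc j)))) ^ 2) \<longlonglongrightarrow> (\<Sum>n\<in>F'. norm (a n) ^ 2)"
  proof (intro tendsto_sum)
    fix n assume "n \<in> F'"
    hence n: "n \<ge> 1" using F'N0 by auto
    have e: "norm (a k * of_nat n powr (- of_real x)) ^ 2 = (norm (a k) * real n powr (- x)) ^ 2" for k x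
      by (simp add: norm_mult norm_npow)
    have l0: "(\<lambda>j. 1 / real (Suc j)) \<longlonglongrightarrow> 0"
      by (rule LIMSEQ_Suc[OF lim_1_over_n])
    have "(\<lambda>j. real n powr (- (1 / real (Suc j)))) \<longlonglongrightarrow> real n powr (- 0)"
      by (rule tendsto_powr'[OF tendsto_const tendsto_minus[OF l0]]) (use n in auto)
    hence "(\<lambda>j. (norm (a n) * real n powr (- (1 / real (Suc j)))) ^ 2) \<longlonglongrightarrow> (norm (a n) * real n powr (- 0)) ^ 2"
      by (intro tendsto_power tendsto_mult tendsto_const)
    thus "(\<lambda>j. norm (a n * of_nat n powr (- of_real (1 / real (Suc j)))) ^ 2) \<longlonglongrightarrow> norm (a n) ^ 2"
      unfolding e using n by simp
  qed
  have "(\<Sum>n\<in>F'. norm (a n) ^ 2) \<le> 1"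
  proof (rule LIMSEQ_le_const2[OF lim], intro exI allI impI)
    fix j :: nat
    show "(\<Sum>n\<in>F'. norm (a n * of_nat n powr (- of_real (1 / real (Suc j)))) ^ 2) \<le> 1"
      by (rule step1) simp
  qed
  thus ?thesis using sF by simp
qed

definition ek :: "nat \<Rightarrow> nat \<Rightarrow> complex" where
  "ek k = (\<lambda>n. if n = k then 1 else 0)"

lemma ek_Aplus: "k \<ge> 1 \<Longrightarrow> ek k \<in> Aplus"
proof -
  assume k: "k \<ge> 1"
  have "summable (\<lambda>n. norm (ek k n))"
    by (rule summable_finite[of "{k}"]) (auto simp: ek_def)
  thus ?thesis using k by (simp add: Aplus_def ek_def)
qed

lemma ek_val: "dirichlet_val (ek k) w = of_nat k powr (- w)"
proof -
  have "(\<lambda>n. ek k n * of_nat n powr (- w)) = (\<lambda>n. if n = k then of_nat n powr (- w) else 0)"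
    by (auto simp: ek_def)
  thus ?thesis using sums_single[of k "\<lambda>n. of_nat n powr (- w)"]
    by (simp add: dirichlet_val_def sums_iff)
qed

lemma dunit_ek: "dunit = ek 1" by (simp add: dunit_def ek_def fun_eq_iff)

lemma dunit_val: "dirichlet_val dunit w = 1"
  by (simp add: dunit_ek ek_val)

lemma npow_power: "(of_nat (k ^ j) :: complex) powr z = (of_nat k powr z) ^ j"
proof (induction j)
  case 0 then show ?case by simp
next
  case (Suc j)
  have "(of_nat (k ^ Suc j) :: complex) powr z = (of_nat k * of_nat (k ^ j)) powr z" by simp
  also have "\<dots> = of_nat k powr z * of_nat (k ^ j) powr z" by (rule powr_times_real) auto
  finally show ?case using Suc by simp
qed

lemma geom_inverse_exists:
  fixes lam :: complex
  assumes k: "k \<ge> 2" and lam: "norm lam > 1"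
  shows "\<exists>v\<in>Aplus. \<forall>w. Re w \<ge> 0 \<longrightarrow> dirichlet_val v w = 1 / (lam - of_nat k powr (- w))"
proof -
  define g where "g j = k ^ j" for j
  have sm: "strict_mono g" using k by (auto simp: g_def strict_mono_def intro: power_strict_increasing)
  hence inj: "inj g" by (rule strict_mono_imp_inj_on)
  define v where "v n = (if n \<in> range g then (1 / lam) ^ Suc (inv g n) else 0)" for n
  have vg: "v (g j) = (1 / lam) ^ Suc j" for j by (simp add: v_def inv_f_f[OF inj])
  have v0: "v 0 = 0" using k by (auto simp: v_def g_def)
  have nl: "norm (1 / lam) < 1" using lam by (simp add: norm_divide divide_less_eq)
  have nvg: "norm (v (g j)) = norm (1/lam) * norm (1/lam) ^ j" for j
    by (simp only: vg norm_power power_Suc norm_mult)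
  have "summable (\<lambda>j. norm (v (g j)))"
    unfolding nvg
    by (rule summable_mult) (use summable_geometric[of "norm (1/lam)"] nl in simp)
  hence sv: "summable (\<lambda>n. norm (v n))"
    by (subst (asm) summable_mono_reindex[OF sm, where f="\<lambda>n. norm (v n)"]) (auto simp: v_def)
  have vA: "v \<in> Aplus" using sv v0 by (simp add: Aplus_def)
  show ?thesis
  proof (intro bexI[OF _ vA] allI impI)
    fix w :: complex assume w: "Re w \<ge> 0"
    define q where "q = of_nat k powr (- w) / lam"
    have nq: "norm q < 1"
    proof -
      have "norm (of_nat k powr (- w) :: complex) \<le> 1" by (rule norm_npow_le1[OF w])
      thus ?thesis using lam by (simp add: q_def norm_divide divide_less_eq)
    qed
    have "(\<lambda>j. (1 / lam) * q ^ j) sums ((1 / lam) * (1 / (1 - q)))"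
      by (rule sums_mult[OF geometric_sums[OF nq]])
    moreover have "v (g j) * of_nat (g j) powr (- w) = (1 / lam) * q ^ j" for j
    proof -
      have "v (g j) * of_nat (g j) powr (- w) = (1/lam) ^ Suc j * (of_nat k powr (- w)) ^ j"
        unfolding vg by (simp only: g_def npow_power)
      thus ?thesis by (simp add: q_def power_divide field_simps)
    qed
    ultimately have "(\<lambda>j. v (g j) * of_nat (g j) powr (- w)) sums ((1 / lam) * (1 / (1 - q)))" by simp
    hence "(\<lambda>n. v n * of_nat n powr (- w)) sums ((1 / lam) * (1 / (1 - q)))"
      by (subst (asm) sums_mono_reindex[OF sm, where f="\<lambda>n. v n * of_nat n powr (- w)"]) (auto simp: v_def)
    moreover have "(1 / lam) * (1 / (1 - q)) = 1 / (lam - of_nat k powr (- w))"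
      using lam nq by (auto simp: q_def field_simps)
    ultimately show "dirichlet_val v w = 1 / (lam - of_nat k powr (- w))"
      by (simp add: dirichlet_val_def sums_iff)
  qed
qed

lemma spectral_bound:
  assumes auto: "Aplus_automorphism T"
    and u: "u \<in> Aplus" and Tu: "T u = ek k" and k: "k \<ge> 2"
    and w0: "Re w0 \<ge> 0"
  shows "norm (dirichlet_val u w0) \<le> 1"
proof (rule ccontr)
  assume "\<not> norm (dirichlet_val u w0) \<le> 1"
  hence big: "norm (dirichlet_val u w0) > 1" by simp
  define lam where "lam = dirichlet_val u w0"
  have bij: "bij_betw T Aplus Aplus" and add: "\<forall>a\<in>Aplus. \<forall>b\<in>Aplus. T (\<lambda>n. a n + b n) = (\<lambda>n. T a n + T b n)"
    and scal: "\<forall>c. \<forall>a\<in>Aplus. T (\<lambda>n. c * a n) = (\<lambda>n. c * T a n)"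
    and mul: "\<forall>a\<in>Aplus. \<forall>b\<in>Aplus. T (dconv a b) = dconv (T a) (T b)"
    and unit: "T dunit = dunit"
    using auto by (auto simp: Aplus_automorphism_def)
  obtain v where vA: "v \<in> Aplus" and vval: "\<And>w. Re w \<ge> 0 \<Longrightarrow> dirichlet_val v w = 1 / (lam - of_nat k powr (- w))"
    using geom_inverse_exists[OF k, of lam] big by (auto simp: lam_def)
  define y' where "y' = (\<lambda>n. lam * dunit n + (-1) * ek k n)"
  have ekA: "ek k \<in> Aplus" using k by (intro ek_Aplus) auto
  have y'A: "y' \<in> Aplus" unfolding y'_def by (intro Aplus_add Aplus_scale dunit_Aplus ekA)
  have "dconv y' v = dunit"
  proof (rule Aplus_unique[OF dconv_Aplus[OF y'A vA] dunit_Aplus], intro ballI)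
    fix s assume s: "s \<in> halfplane 0"
    hence s0: "Re s \<ge> 0" by (simp add: halfplane_def)
    have ne: "lam - of_nat k powr (- s) \<noteq> 0"
    proof
      assume "lam - of_nat k powr (- s) = 0"
      hence "norm lam = norm (of_nat k powr (- s) :: complex)" by simp
      with norm_npow_le1[OF s0, of k] big show False by (simp add: lam_def)
    qed
    have "dirichlet_val y' s = dirichlet_val (\<lambda>n. lam * dunit n) s + dirichlet_val (\<lambda>n. (-1) * ek k n) s"
      unfolding y'_def by (rule dirichlet_val_add[OF Aplus_scale[OF dunit_Aplus] Aplus_scale[OF ekA] s0])
    also have "\<dots> = lam * 1 + (-1) * of_nat k powr (- s)"
      by (simp only: dirichlet_val_scale[OF dunit_Aplus s0] dirichlet_val_scale[OF ekA s0] dunit_val ek_val)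
    finally have "dirichlet_val y' s = lam - of_nat k powr (- s)" by simp
    thus "dirichlet_val (dconv y' v) s = dirichlet_val dunit s"
      using s0 ne by (simp add: dconv_val[OF y'A vA s0] vval dunit_val)
  qed
  obtain x where xA: "x \<in> Aplus" and Tx: "T x = v"
    using bij vA by (metis bij_betw_imp_surj_on imageE)
  define y where "y = (\<lambda>n. lam * dunit n + (-1) * u n)"
  have yA: "y \<in> Aplus" unfolding y_def by (intro Aplus_add Aplus_scale dunit_Aplus u)
  have Ty: "T y = y'"
  proof -
    have "T y = (\<lambda>n. T (\<lambda>n. lam * dunit n) n + T (\<lambda>n. (-1) * u n) n)"
      unfolding y_def by (rule add[rule_format, OF Aplus_scale[OF dunit_Aplus] Aplus_scale[OF u]])
    also have "\<dots> = y'"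
    proof -
      have t1: "T (\<lambda>n. lam * dunit n) = (\<lambda>n. lam * T dunit n)" using scal dunit_Aplus by blast
      have t2: "T (\<lambda>n. (-1) * u n) = (\<lambda>n. (-1) * T u n)" using scal u by blast
      show ?thesis by (simp only: t1 t2 unit Tu y'_def)
    qed
    finally show ?thesis .
  qed
  have "T (dconv y x) = T dunit"
    using mul yA xA Ty Tx unit \<open>dconv y' v = dunit\<close> by simp
  hence yx: "dconv y x = dunit"
    using bij_betw_imp_inj_on[OF bij] dconv_Aplus[OF yA xA] dunit_Aplus by (auto dest: inj_onD)
  have "dirichlet_val y w0 * dirichlet_val x w0 = 1"
    using dconv_val[OF yA xA w0] yx dunit_val by simp
  moreover have "dirichlet_val y w0 = 0"
  proof -
    have "dirichlet_val y w0 = dirichlet_val (\<lambda>n. lam * dunit n) w0 + dirichlet_val (\<lambda>n. (-1) * u n) w0"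
      unfolding y_def by (rule dirichlet_val_add[OF Aplus_scale[OF dunit_Aplus] Aplus_scale[OF u] w0])
    also have "\<dots> = lam * 1 + (-1) * dirichlet_val u w0"
      by (simp only: dirichlet_val_scale[OF dunit_Aplus w0] dirichlet_val_scale[OF u w0] dunit_val)
    finally show ?thesis by (simp add: lam_def)
  qed
  ultimately show False by simp
qed

lemma Dclass_expand:
  assumes "\<psi> \<in> Dclass"
  obtains c :: "nat \<Rightarrow> complex" and \<sigma>1 :: real where "\<sigma>1 > 0"
    "summable (\<lambda>n. norm (c n) * real n powr (- \<sigma>1))"
    "\<And>w. Re w \<ge> \<sigma>1 \<Longrightarrow> \<psi> w = (\<Sum>n. c n * of_nat n powr (- w))"
proof -
  obtain c :: "nat \<Rightarrow> complex" and \<sigma> :: real where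
    S: "\<And>s. Re s > \<sigma> \<Longrightarrow> (\<lambda>n. c n * of_nat n powr (- s)) sums \<psi> s"
    using assms unfolding Dclass_def by blast
  define s0 where "s0 = max \<sigma> 0 + 1"
  define \<sigma>1 where "\<sigma>1 = s0 + 2"
  have "Re (of_real s0) > \<sigma>" by (simp add: s0_def)
  hence "summable (\<lambda>n. c n * of_nat n powr (- of_real s0))"
    using S[of "of_real s0"] sums_summable by blast
  hence "(\<lambda>n. c n * of_nat n powr (- of_real s0)) \<longlonglongrightarrow> 0" by (rule summable_LIMSEQ_zero)
  hence "Bseq (\<lambda>n. c n * of_nat n powr (- of_real s0))" by (intro convergent_imp_Bseq convergentI)
  then obtain B where B: "B > 0" "\<And>n. norm (c n * of_nat n powr (- of_real s0)) \<le> B" by (auto elim: BseqE)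
  have le: "norm (norm (c n) * real n powr (- \<sigma>1)) \<le> B * real n powr (-2)" for n
  proof (cases "n = 0")
    case False
    have "norm (c n) * real n powr (- \<sigma>1) = norm (c n * of_nat n powr (- of_real s0)) * real n powr (-2)"
      using False by (simp add: norm_mult norm_npow \<sigma>1_def powr_add[symmetric])
    also have "\<dots> \<le> B * real n powr (-2)" by (intro mult_right_mono B(2)) auto
    finally show ?thesis by simp
  qed simp
  have "summable (\<lambda>n. B * real n powr (-2))"
    by (intro summable_mult) (simp add: summable_real_powr_iff)
  hence summ: "summable (\<lambda>n. norm (c n) * real n powr (- \<sigma>1))"
    by (rule summable_comparison_test[rotated]) (use le in auto)
  show ?thesis
  proof (rule that[of \<sigma>1 c])
    show "\<sigma>1 > 0" by (simp add: \<sigma>1_def s0_def)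
    show "summable (\<lambda>n. norm (c n) * real n powr (- \<sigma>1))" by (rule summ)
    fix w :: complex assume "Re w \<ge> \<sigma>1"
    hence "Re w > \<sigma>" by (simp add: \<sigma>1_def s0_def)
    thus "\<psi> w = (\<Sum>n. c n * of_nat n powr (- w))" using S by (simp add: sums_iff)
  qed
qed

lemma Dseries_bound:
  fixes c :: "nat \<Rightarrow> complex"
  assumes summ: "summable (\<lambda>n. norm (c n) * real n powr (- \<sigma>1))" and w: "Re w \<ge> \<sigma>1"
  shows "norm (\<Sum>n. c n * of_nat n powr (- w)) \<le> (\<Sum>n. norm (c n) * real n powr (- \<sigma>1))"
proof -
  have "norm ((\<Sum>n. c n * of_nat n powr (- w)) - (\<Sum>n\<le>0. c n * of_nat n powr (- w)))
      \<le> (\<Sum>n. norm (c n) * real n powr (- \<sigma>1)) * real (Suc 0) powr (\<sigma>1 - Re w)"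
    by (rule tail_bound(2)[OF summ w])
  thus ?thesis by simp
qed

lemma norm_tendsto_at_top_False:
  fixes f :: "'a \<Rightarrow> complex"
  assumes "F \<noteq> bot" "(f \<longlongrightarrow> l) F" "filterlim (\<lambda>x. norm (f x)) at_top F"
  shows False
  using not_tendsto_and_filterlim_at_infinity[OF assms(1,2) filterlim_norm_at_top_imp_at_infinity[OF assms(3)]] .

lemma two_powr_at_top: "filterlim (\<lambda>x::real. 2 powr (x - S)) at_top at_top"
proof -
  have h1: "filterlim (\<lambda>x::real. -S + x) at_top at_top"
    by (rule filterlim_tendsto_add_at_top[OF tendsto_const filterlim_ident])
  have h2: "filterlim (\<lambda>x::real. (-S + x) * ln 2) at_top at_top"
    by (rule filterlim_at_top_mult_tendsto_pos[OF tendsto_const _ h1]) simp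
  have "filterlim (\<lambda>x. exp ((-S + x) * ln 2)) at_top at_top"
    by (rule filterlim_compose[OF exp_at_top h2])
  thus ?thesis by (simp add: powr_def algebra_simps)
qed

lemma preimage_ek:
  assumes bounded: "\<forall>a\<in>Aplus. \<exists>b\<in>Aplus. \<forall>s\<in>halfplane 0. dirichlet_val b s = dirichlet_val a (\<phi> s)"
    and auto: "Aplus_automorphism (comp_op \<phi>)" and k: "k \<ge> 1"
  obtains u where "u \<in> Aplus" "comp_op \<phi> u = ek k" "\<And>s. s \<in> halfplane 0 \<Longrightarrow> dirichlet_val u (\<phi> s) = of_nat k powr (- s)"
proof -
  have bij: "bij_betw (comp_op \<phi>) Aplus Aplus" using auto by (simp add: Aplus_automorphism_def)
  obtain u where u: "u \<in> Aplus" "comp_op \<phi> u = ek k"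
    using bij ek_Aplus[OF k] by (metis bij_betw_imp_surj_on imageE)
  have "dirichlet_val u (\<phi> s) = of_nat k powr (- s)" if "s \<in> halfplane 0" for s
  proof -
    have "dirichlet_val (comp_op \<phi> u) s = dirichlet_val u (\<phi> s)"
      using comp_op_char[OF bounded u(1)] that by blast
    thus ?thesis using u(2) by (simp add: ek_val)
  qed
  thus ?thesis by (rule that[OF u])
qed

lemma two_neg_powr_0: "((\<lambda>x::real. (of_nat k :: complex) powr (- of_real x)) \<longlongrightarrow> 0) at_top" if "k \<ge> 2"
proof -
  have lim: "((\<lambda>x::real. (1 / real k) powr x) \<longlongrightarrow> 0) at_top"
    by (rule geo_decay) (use that in \<open>auto simp: filterlim_ident\<close>)
  have eq: "norm ((of_nat k :: complex) powr (- of_real x)) = (1 / real k) powr x" for x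
  proof -
    have "norm ((of_nat k :: complex) powr (- of_real x)) = real k powr (- x)"
      using norm_npow[of k "of_real x"] by simp
    also have "\<dots> = 1 / real k powr x" by (rule powr_minus_divide)
    also have "\<dots> = (1 / real k) powr x" using that by (subst powr_divide) auto
    finally show ?thesis .
  qed
  have "((\<lambda>x::real. norm ((of_nat k :: complex) powr (- of_real x))) \<longlongrightarrow> 0) at_top"
    unfolding eq by (rule lim)
  thus ?thesis by (rule tendsto_norm_zero_cancel)
qed

lemma lead1:
  assumes a: "a \<in> Aplus" and w: "filterlim (\<lambda>x. Re (w x)) at_top F"
  shows "((\<lambda>x. dirichlet_val a (w x)) \<longlongrightarrow> a 1) F"
  using lead_Aplus[OF a _ w, of 1] a by (simp add: Aplus_def)

lemma lead2:
  assumes a: "a \<in> Aplus" and a1: "a 1 = 0" and w: "filterlim (\<lambda>x. Re (w x)) at_top F"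
  shows "((\<lambda>x. of_nat 2 powr (w x) * dirichlet_val a (w x)) \<longlongrightarrow> a 2) F"
proof -
  have "(\<Sum>k<2. a k * of_nat k powr (- w x)) = 0" for x
    using a a1 by (simp add: Aplus_def numeral_2_eq_2)
  thus ?thesis using lead_Aplus[OF a _ w, of 2] by simp
qed

lemma norm_npow': "norm (of_nat n powr z :: complex) = real n powr Re z"
  using norm_powr_real_powr[of "of_nat n :: complex" z] by simp

lemma Rephi_lower:
  assumes phi_eq: "\<forall>s\<in>halfplane 0. \<phi> s = of_nat c0 * s + \<psi> s"
    and \<sigma>1: "\<sigma>1 > 0" and summ: "summable (\<lambda>n. norm (c n) * real n powr (- \<sigma>1))"
    and psi: "\<And>w. Re w \<ge> \<sigma>1 \<Longrightarrow> \<psi> w = (\<Sum>n. c n * of_nat n powr (- w))"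
  shows "eventually (\<lambda>x::real. Re (\<phi> (of_real x)) \<ge> real c0 * x - (\<Sum>n. norm (c n) * real n powr (- \<sigma>1))) at_top"
  using eventually_ge_at_top[of \<sigma>1]
proof eventually_elim
  case (elim x)
  have hp: "of_real x \<in> halfplane 0" using elim \<sigma>1 by (simp add: halfplane_def)
  have "norm (\<psi> (of_real x)) \<le> (\<Sum>n. norm (c n) * real n powr (- \<sigma>1))"
    using Dseries_bound[OF summ, of "of_real x"] psi[of "of_real x"] elim by simp
  hence "Re (\<psi> (of_real x)) \<ge> - (\<Sum>n. norm (c n) * real n powr (- \<sigma>1))"
    using abs_Re_le_cmod[of "\<psi> (of_real x)"] by linarith
  thus ?case using phi_eq hp by simp
qed

lemma Rephi_at_top:
  assumes ev: "eventually (\<lambda>x::real. Re (\<phi> (of_real x)) \<ge> real c0 * x - S) at_top" and c0: "c0 \<ge> 1"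
  shows "filterlim (\<lambda>x::real. Re (\<phi> (of_real x))) at_top at_top"
proof -
  have "filterlim (\<lambda>x::real. - S + real c0 * x) at_top at_top"
    by (rule filterlim_tendsto_add_at_top[OF tendsto_const])
       (rule filterlim_tendsto_pos_mult_at_top[OF tendsto_const _ filterlim_ident], use c0 in simp)
  hence lim: "filterlim (\<lambda>x::real. real c0 * x - S) at_top at_top" by (simp add: algebra_simps)
  show ?thesis by (rule filterlim_at_top_mono[OF lim ev])
qed

lemma u_leads:
  assumes u: "u \<in> Aplus" and uphi: "\<And>s. s \<in> halfplane 0 \<Longrightarrow> dirichlet_val u (\<phi> s) = of_nat 2 powr (- s)"
    and top: "filterlim (\<lambda>x::real. Re (\<phi> (of_real x))) at_top at_top"
  shows "u 1 = 0" "((\<lambda>x::real. of_nat 2 powr (\<phi> (of_real x)) * of_nat 2 powr (- of_real x)) \<longlongrightarrow> u 2) at_top"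
proof -
  have ev: "eventually (\<lambda>x::real. dirichlet_val u (\<phi> (of_real x)) = of_nat 2 powr (- of_real x)) at_top"
    using eventually_gt_at_top[of "0::real"] by eventually_elim (simp add: uphi halfplane_def)
  have l1: "((\<lambda>x::real. dirichlet_val u (\<phi> (of_real x))) \<longlongrightarrow> u 1) at_top"
    by (rule lead1[OF u top])
  have "((\<lambda>x::real. dirichlet_val u (\<phi> (of_real x))) \<longlongrightarrow> 0) at_top"
    by (rule Lim_transform_eventually[OF two_neg_powr_0]) (use ev in \<open>auto elim: eventually_mono\<close>)
  with l1 show u1: "u 1 = 0" by (metis tendsto_unique trivial_limit_at_top_linorder)
  have l2: "((\<lambda>x::real. of_nat 2 powr (\<phi> (of_real x)) * dirichlet_val u (\<phi> (of_real x))) \<longlongrightarrow> u 2) at_top"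
    by (rule lead2[OF u u1 top])
  show "((\<lambda>x::real. of_nat 2 powr (\<phi> (of_real x)) * of_nat 2 powr (- of_real x)) \<longlongrightarrow> u 2) at_top"
    by (rule Lim_transform_eventually[OF l2]) (use ev in \<open>auto elim: eventually_mono\<close>)
qed

lemma case_c0_ge2:
  assumes u: "u \<in> Aplus" and uphi: "\<And>s. s \<in> halfplane 0 \<Longrightarrow> dirichlet_val u (\<phi> s) = of_nat 2 powr (- s)"
    and ev: "eventually (\<lambda>x::real. Re (\<phi> (of_real x)) \<ge> real c0 * x - S) at_top" and c0: "c0 \<ge> 2"
  shows False
proof -
  have top: "filterlim (\<lambda>x::real. Re (\<phi> (of_real x))) at_top at_top"
    by (rule Rephi_at_top[OF ev]) (use c0 in auto)
  note L = u_leads[OF u uphi top]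
  have "filterlim (\<lambda>x::real. norm (of_nat 2 powr (\<phi> (of_real x)) * of_nat 2 powr (- of_real x) :: complex)) at_top at_top"
  proof (rule filterlim_at_top_mono[OF two_powr_at_top[of S]])
    show "eventually (\<lambda>x. 2 powr (x - S) \<le> norm (of_nat 2 powr (\<phi> (of_real x)) * of_nat 2 powr (- of_real x) :: complex)) at_top"
      using eventually_conj[OF ev eventually_ge_at_top[of "0::real"]]
    proof eventually_elim
      case (elim x)
      have "x - S \<le> Re (\<phi> (of_real x)) - x"
      proof -
        have "real c0 * x \<ge> 2 * x" using c0 elim by (intro mult_right_mono) auto
        thus ?thesis using elim by linarith
      qed
      hence "2 powr (x - S) \<le> 2 powr (Re (\<phi> (of_real x)) - x)" by simp
      also have "\<dots> = norm (of_nat 2 powr (\<phi> (of_real x)) * of_nat 2 powr (- of_real x) :: complex)"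
        unfolding norm_mult norm_npow' norm_npow by (simp add: powr_add[symmetric])
      finally show ?case .
    qed
  qed
  thus False by (intro norm_tendsto_at_top_False[OF _ L(2)]) simp
qed

lemma two_powr_exp: "(of_nat 2 :: complex) powr z = exp (z * of_real (ln 2))"
proof -
  have "Ln (of_nat 2 :: complex) = of_real (ln (of_nat 2))" by (rule Ln_of_nat) simp
  thus ?thesis by (simp add: powr_def)
qed

lemma case_c0_1:
  assumes auto: "Aplus_automorphism (comp_op \<phi>)"
    and bounded: "\<forall>a\<in>Aplus. \<exists>b\<in>Aplus. \<forall>s\<in>halfplane 0. dirichlet_val b s = dirichlet_val a (\<phi> s)"
    and hol: "\<phi> holomorphic_on halfplane 0"
    and maps: "\<phi> ` halfplane 0 \<subseteq> halfplane 0"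
    and ev: "eventually (\<lambda>x::real. Re (\<phi> (of_real x)) \<ge> real 1 * x - S) at_top"
  shows "\<exists>\<tau>::real. \<forall>s\<in>halfplane 0. \<phi> s = s + \<i> * of_real \<tau>"
proof -
  have top: "filterlim (\<lambda>x::real. Re (\<phi> (of_real x))) at_top at_top"
    by (rule Rephi_at_top[OF ev]) auto
  obtain u where uA: "u \<in> Aplus" and Tu: "comp_op \<phi> u = ek 2"
    and uphi: "\<And>s. s \<in> halfplane 0 \<Longrightarrow> dirichlet_val u (\<phi> s) = of_nat 2 powr (- s)"
    using preimage_ek[OF bounded auto, of 2] by auto
  note UL = u_leads[OF uA uphi top]
  define b where "b = comp_op \<phi> (ek 2)"
  have bA: "b \<in> Aplus" and bval0: "\<And>s. s \<in> halfplane 0 \<Longrightarrow> dirichlet_val b s = of_nat 2 powr (- \<phi> s)"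
    using comp_op_char[OF bounded ek_Aplus[of 2]] by (auto simp: b_def ek_val)
  have topid: "filterlim (\<lambda>x::real. Re (of_real x :: complex)) at_top at_top" by (simp add: filterlim_ident)
  have evb: "eventually (\<lambda>x::real. dirichlet_val b (of_real x) = of_nat 2 powr (- \<phi> (of_real x))) at_top"
    using eventually_gt_at_top[of "0::real"] by eventually_elim (simp add: bval0 halfplane_def)
  have b1: "b 1 = 0"
  proof -
    have l1: "((\<lambda>x::real. dirichlet_val b (of_real x)) \<longlongrightarrow> b 1) at_top" by (rule lead1[OF bA topid])
    have "((\<lambda>x::real. (1/2) powr (Re (\<phi> (of_real x)))) \<longlongrightarrow> 0) at_top"
      by (rule geo_decay[OF _ _ top]) auto
    moreover have "norm ((of_nat 2 :: complex) powr (- \<phi> (of_real x))) = (1/2) powr (Re (\<phi> (of_real x)))" for x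
    proof -
      have "norm ((of_nat 2 :: complex) powr (- \<phi> (of_real x))) = real 2 powr (- Re (\<phi> (of_real x)))"
        by (rule norm_npow)
      also have "\<dots> = 1 / real 2 powr Re (\<phi> (of_real x))" by (rule powr_minus_divide)
      also have "\<dots> = (1 / real 2) powr Re (\<phi> (of_real x))" by (subst powr_divide) auto
      finally show ?thesis by simp
    qed
    ultimately have "((\<lambda>x::real. norm ((of_nat 2 :: complex) powr (- \<phi> (of_real x)))) \<longlongrightarrow> 0) at_top" by simp
    hence "((\<lambda>x::real. (of_nat 2 :: complex) powr (- \<phi> (of_real x))) \<longlongrightarrow> 0) at_top"
      by (rule tendsto_norm_zero_cancel)
    hence "((\<lambda>x::real. dirichlet_val b (of_real x)) \<longlongrightarrow> 0) at_top"
      by (rule Lim_transform_eventually) (use evb in \<open>auto elim: eventually_mono\<close>)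
    with l1 show ?thesis by (metis tendsto_unique trivial_limit_at_top_linorder)
  qed
  have Lb: "((\<lambda>x::real. of_nat 2 powr (of_real x) * of_nat 2 powr (- \<phi> (of_real x))) \<longlongrightarrow> b 2) at_top"
    by (rule Lim_transform_eventually[OF lead2[OF bA b1 topid]]) (use evb in \<open>auto elim: eventually_mono\<close>)
  have "((\<lambda>x::real. (of_nat 2 powr (of_real x) * of_nat 2 powr (- \<phi> (of_real x))) *
          (of_nat 2 powr (\<phi> (of_real x)) * of_nat 2 powr (- of_real x))) \<longlongrightarrow> b 2 * u 2) at_top"
    by (rule tendsto_mult[OF Lb UL(2)])
  moreover have "(of_nat 2 powr (of_real x) * of_nat 2 powr (- \<phi> (of_real x))) *
          (of_nat 2 powr (\<phi> (of_real x)) * of_nat 2 powr (- of_real x)) = (1::complex)" for x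
  proof -
    have "(of_nat 2 powr (of_real x) * of_nat 2 powr (- \<phi> (of_real x))) *
          (of_nat 2 powr (\<phi> (of_real x)) * of_nat 2 powr (- of_real x))
        = (of_nat 2 powr (of_real x) * of_nat 2 powr (- of_real x)) *
          (of_nat 2 powr (\<phi> (of_real x)) * (of_nat 2 :: complex) powr (- \<phi> (of_real x)))"
      by (simp only: ac_simps)
    also have "\<dots> = 1" using npow_cancel[of 2] by simp
    finally show ?thesis .
  qed
  ultimately have "((\<lambda>x::real. 1::complex) \<longlongrightarrow> b 2 * u 2) at_top" by simp
  hence bu: "b 2 * u 2 = 1" by (simp add: tendsto_const_iff)
  have bbd: "\<forall>s\<in>halfplane 0. norm (dirichlet_val b s) \<le> 1"
  proof
    fix s assume s: "s \<in> halfplane 0"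
    hence "Re (\<phi> s) > 0" using maps by (auto simp: halfplane_def)
    thus "norm (dirichlet_val b s) \<le> 1" using bval0[OF s] norm_npow_le1[of "\<phi> s" 2] by simp
  qed
  have ubd: "\<forall>s\<in>halfplane 0. norm (dirichlet_val u s) \<le> 1"
    using spectral_bound[OF auto uA Tu] by (auto simp: halfplane_def)
  have u2: "norm (u 2) \<le> 1"
  proof -
    have "(\<Sum>n\<in>{2}. norm (u n) ^ 2) \<le> 1" by (rule parseval[OF uA ubd]) auto
    hence "norm (u 2) ^ 2 \<le> 1 ^ 2" by simp
    thus ?thesis by (rule power2_le_imp_le) simp
  qed
  have b2: "norm (b 2) = 1"
  proof -
    have "(\<Sum>n\<in>{2}. norm (b n) ^ 2) \<le> 1" by (rule parseval[OF bA bbd]) auto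
    hence "norm (b 2) ^ 2 \<le> 1 ^ 2" by simp
    hence le: "norm (b 2) \<le> 1" by (rule power2_le_imp_le) simp
    have "norm (b 2) * norm (u 2) = 1" using bu by (metis norm_mult norm_one)
    hence "norm (b 2) \<ge> 1" using u2
      by (metis mult_left_le norm_ge_zero)
    with le show ?thesis by simp
  qed
  have bn: "b n = 0" if "n \<noteq> 2" for n
  proof -
    have "(\<Sum>k\<in>{2, n}. norm (b k) ^ 2) \<le> 1" by (rule parseval[OF bA bbd]) auto
    hence "norm (b 2) ^ 2 + norm (b n) ^ 2 \<le> 1" using that by simp
    hence "norm (b n) ^ 2 \<le> 0" using b2 by simp
    thus ?thesis by simp
  qed
  have beq: "b = (\<lambda>n. b 2 * ek 2 n)" using bn by (auto simp: ek_def fun_eq_iff)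
  define c where "c = b 2"
  have key: "exp (- (of_real (ln 2)) * (\<phi> s - s)) = c" if s: "s \<in> halfplane 0" for s
  proof -
    have s0: "Re s \<ge> 0" using s by (simp add: halfplane_def)
    have "of_nat 2 powr (- \<phi> s) = dirichlet_val b s" using bval0[OF s] by simp
    also have "\<dots> = c * of_nat 2 powr (- s)"
      by (subst beq) (simp add: dirichlet_val_scale[OF ek_Aplus s0] ek_val c_def)
    finally have "(of_nat 2 :: complex) powr (- \<phi> s) = c * of_nat 2 powr (- s)" .
    hence "exp (- \<phi> s * of_real (ln 2)) = c * exp (- s * of_real (ln 2))"
      by (simp only: two_powr_exp)
    hence "exp (- \<phi> s * of_real (ln 2)) * exp (s * of_real (ln 2)) = c"
      by (simp add: exp_minus field_simps)
    thus ?thesis by (simp add: exp_add[symmetric] algebra_simps)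
  qed
  define D where "D s = \<phi> s - s" for s
  have Dhol: "D holomorphic_on halfplane 0" unfolding D_def[abs_def] by (intro holomorphic_intros hol)
  have D0: "(D has_field_derivative 0) (at s within halfplane 0)" if s: "s \<in> halfplane 0" for s
  proof -
    obtain D' where D': "(D has_field_derivative D') (at s)"
      using Dhol s by (auto simp: holomorphic_on_open open_halfplane)
    have E1: "((\<lambda>z. exp (- (of_real (ln 2)) * D z)) has_field_derivative
              exp (- (of_real (ln 2)) * D s) * (- (of_real (ln 2)) * D')) (at s)"
      by (rule DERIV_chain2[OF DERIV_exp]) (rule DERIV_cmult[OF D'])
    have E2: "((\<lambda>z. exp (- (of_real (ln 2)) * D z)) has_field_derivative 0) (at s)"
      by (rule has_field_derivative_transform_within_open[OF DERIV_const[of c] open_halfplane s])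
         (simp add: key[symmetric] D_def)
    have "exp (- (of_real (ln 2)) * D s) * (- (of_real (ln 2)) * D') = 0"
      using DERIV_unique[OF E1 E2] .
    hence "D' = 0" by simp
    thus ?thesis using D' by (simp add: has_field_derivative_at_within)
  qed
  obtain d where d: "\<And>s. s \<in> halfplane 0 \<Longrightarrow> D s = d"
    using has_field_derivative_zero_constant[OF convex_halfplane D0] by blast
  have one: "(1::complex) \<in> halfplane 0" by (simp add: halfplane_def)
  have "exp (- (of_real (ln 2)) * d) = c" using key[OF one] d[OF one] by (simp add: D_def)
  hence "norm (exp (- (of_real (ln 2)) * d)) = 1" using b2 by (simp add: c_def)
  hence "exp (- (ln 2) * Re d) = 1" by (simp add: norm_exp_eq_Re)
  hence "- (ln 2) * Re d = 0" by simp
  hence Red: "Re d = 0" by simp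
  show ?thesis
  proof (intro exI ballI)
    fix s assume "s \<in> halfplane 0"
    hence "\<phi> s = s + d" using d by (simp add: D_def algebra_simps)
    moreover have "d = \<i> * of_real (Im d)" using Red by (simp add: complex_eq_iff)
    ultimately show "\<phi> s = s + \<i> * of_real (Im d)" by simp
  qed
qed

lemma q_powr_at_top:
  fixes q :: real assumes "q > 1"
  shows "filterlim (\<lambda>x::real. q powr x) at_top at_top"
proof -
  have "filterlim (\<lambda>x::real. x * ln q) at_top at_top"
    by (rule filterlim_at_top_mult_tendsto_pos[OF tendsto_const _ filterlim_ident]) (use assms in simp)
  hence "filterlim (\<lambda>x. exp (x * ln q)) at_top at_top"
    by (rule filterlim_compose[OF exp_at_top])
  thus ?thesis using assms by (simp add: powr_def mult.commute)
qed

lemma npow_real: "(of_nat m :: complex) powr (of_real x) = of_real (real m powr x)"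
  using powr_of_real[of "real m" x] by simp

lemma coeff_setup:
  fixes c :: "nat \<Rightarrow> complex"
  assumes summ: "summable (\<lambda>n. norm (c n) * real n powr (- \<sigma>1))"
    and m: "m \<ge> 2" and low: "\<And>k. 2 \<le> k \<Longrightarrow> k < m \<Longrightarrow> c k = 0"
    and W: "filterlim (\<lambda>x. Re (W x)) at_top F"
  shows "((\<lambda>x. of_nat m powr (W x) * ((\<Sum>n. c n * of_nat n powr (- W x)) - c 1)) \<longlongrightarrow> c m) F"
    and "((\<lambda>x. (\<Sum>n. c n * of_nat n powr (- W x))) \<longlongrightarrow> c 1) F"
proof -
  have Sk: "(\<Sum>k<m. c k * of_nat k powr (- w)) = c 1" for w
  proof -
    have "(\<Sum>k<m. c k * of_nat k powr (- w)) = (\<Sum>k\<in>{1}. c k * of_nat k powr (- w))"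
    proof (rule sum.mono_neutral_right)
      show "{1} \<subseteq> {..<m}" using m by auto
      show "\<forall>i\<in>{..<m} - {1}. c i * of_nat i powr (- w) = 0"
      proof
        fix i assume "i \<in> {..<m} - {1}"
        hence "i = 0 \<or> (2 \<le> i \<and> i < m)" by auto
        thus "c i * of_nat i powr (- w) = 0" using low by auto
      qed
    qed simp
    thus ?thesis by simp
  qed
  show "((\<lambda>x. of_nat m powr (W x) * ((\<Sum>n. c n * of_nat n powr (- W x)) - c 1)) \<longlongrightarrow> c m) F"
    using lead_general[OF summ _ W, of m] m by (simp add: Sk)
  show "((\<lambda>x. (\<Sum>n. c n * of_nat n powr (- W x))) \<longlongrightarrow> c 1) F"
    using lead_general[OF summ _ W, of 1] by simp
qed

lemma Re_c1_pos:
  fixes c :: "nat \<Rightarrow> complex"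
  assumes summ: "summable (\<lambda>n. norm (c n) * real n powr (- \<sigma>1))"
    and pos: "\<And>w. Re w \<ge> \<sigma>1 \<Longrightarrow> Re (\<Sum>n. c n * of_nat n powr (- w)) > 0"
    and m: "m \<ge> 2" and low: "\<And>k. 2 \<le> k \<Longrightarrow> k < m \<Longrightarrow> c k = 0" and cm: "c m \<noteq> 0"
  shows "Re (c 1) > 0"
proof (rule ccontr)
  assume neg: "\<not> Re (c 1) > 0"
  define t0 where "t0 = (Arg (c m) + pi) / ln (real m)"
  have lnm: "ln (real m) > 0" using m by simp
  define W where "W x = of_real x + \<i> * of_real t0" for x :: real
  have Wt: "filterlim (\<lambda>x. Re (W x)) at_top at_top" by (simp add: W_def filterlim_ident)
  define e where "e = (of_nat m :: complex) powr (- (\<i> * of_real t0))"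
  have L: "((\<lambda>x. of_nat m powr (W x) * ((\<Sum>n. c n * of_nat n powr (- W x)) - c 1) * e) \<longlongrightarrow> c m * e) at_top"
    by (rule tendsto_mult_right[OF coeff_setup(1)[OF summ m low Wt]])
  have eq1: "of_nat m powr (W x) * e = of_real (real m powr x)" for x
  proof -
    have "of_nat m powr (W x) * e = (of_nat m :: complex) powr (W x + - (\<i> * of_real t0))"
      unfolding e_def by (rule powr_add[symmetric])
    also have "W x + - (\<i> * of_real t0) = of_real x" by (simp add: W_def)
    finally show ?thesis by (simp add: npow_real)
  qed
  have eq2: "c m * e = - of_real (norm (c m))"
  proof -
    have "e = exp (- (\<i> * of_real t0) * of_real (ln (real m)))"
    proof -
      have "Ln (of_nat m :: complex) = of_real (ln (of_nat m))" by (rule Ln_of_nat) (use m in simp)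
      thus ?thesis using m by (simp add: e_def powr_def)
    qed
    also have "- (\<i> * of_real t0) * of_real (ln (real m)) = - (\<i> * of_real (Arg (c m))) - \<i> * of_real pi"
      using lnm by (simp add: t0_def field_simps)
    finally have e: "e = exp (- (\<i> * of_real (Arg (c m)))) * exp (- (\<i> * of_real pi))"
      by (simp add: exp_diff exp_minus field_simps)
    have "c m * e = of_real (norm (c m)) * exp (\<i> * of_real (Arg (c m))) * exp (- (\<i> * of_real (Arg (c m)))) * exp (- (\<i> * of_real pi))"
      by (subst Arg_eq[OF cm]) (simp add: e mult.assoc)
    also have "\<dots> = of_real (norm (c m)) * exp (- (\<i> * of_real pi))"
      by (simp add: exp_minus)
    also have "exp (- (\<i> * of_real pi)) = (-1 :: complex)"
      by (simp add: exp_minus)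
    finally show ?thesis by simp
  qed
  have L2: "((\<lambda>x. of_real (real m powr x) * ((\<Sum>n. c n * of_nat n powr (- W x)) - c 1)) \<longlongrightarrow> - of_real (norm (c m))) at_top"
  proof -
    have "(\<lambda>x. of_nat m powr (W x) * ((\<Sum>n. c n * of_nat n powr (- W x)) - c 1) * e)
        = (\<lambda>x. of_real (real m powr x) * ((\<Sum>n. c n * of_nat n powr (- W x)) - c 1))"
      by (rule ext) (simp only: eq1[symmetric] ac_simps)
    thus ?thesis using L eq2 by simp
  qed
  have L3: "((\<lambda>x. real m powr x * (Re (\<Sum>n. c n * of_nat n powr (- W x)) - Re (c 1))) \<longlongrightarrow> - norm (c m)) at_top"
    using tendsto_Re[OF L2] by simp
  have "eventually (\<lambda>x. real m powr x * (Re (\<Sum>n. c n * of_nat n powr (- W x)) - Re (c 1)) < 0) at_top"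
    by (rule order_tendstoD(2)[OF L3]) (use cm in simp)
  moreover have "eventually (\<lambda>x. Re (\<Sum>n. c n * of_nat n powr (- W x)) > 0) at_top"
    using eventually_ge_at_top[of \<sigma>1] by eventually_elim (rule pos, simp add: W_def)
  ultimately have "eventually (\<lambda>x::real. False) at_top"
  proof eventually_elim
    case (elim x)
    have "real m powr x > 0" using m by simp
    moreover have "Re (\<Sum>n. c n * of_nat n powr (- W x)) - Re (c 1) > 0" using elim(2) neg by linarith
    ultimately have "real m powr x * (Re (\<Sum>n. c n * of_nat n powr (- W x)) - Re (c 1)) > 0" by simp
    with elim(1) show False by simp
  qed
  thus False by simp
qed

lemma deriv_contra:
  assumes uA: "u \<in> Aplus" and uphi: "\<And>s. s \<in> halfplane 0 \<Longrightarrow> dirichlet_val u (\<phi> s) = of_nat k powr (- s)"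
    and km: "k = m + 1" and m: "m \<ge> 2"
    and w0: "Re w0 > 0"
    and Pt: "((\<lambda>x::real. \<phi> (of_real x)) \<longlongrightarrow> w0) at_top"
    and Pm: "((\<lambda>x::real. of_nat m powr (of_real x) * (\<phi> (of_real x) - w0)) \<longlongrightarrow> cm) at_top"
    and cm: "cm \<noteq> 0"
  shows False
proof -
  define g where "g = dirichlet_val u"
  have ghol: "g holomorphic_on halfplane 0" unfolding g_def by (rule dirichlet_holo[OF uA])
  have w0H: "w0 \<in> halfplane 0" using w0 by (simp add: halfplane_def)
  define h where "h z = (if z = w0 then deriv g w0 else (g z - g w0) / (z - w0))" for z
  have hhol: "h holomorphic_on halfplane 0"
    unfolding h_def[abs_def] by (rule pole_lemma_open[OF ghol open_halfplane])
  define h2 where "h2 z = (if z = w0 then deriv h w0 else (h z - h w0) / (z - w0))" for z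
  have h2hol: "h2 holomorphic_on halfplane 0"
    unfolding h2_def[abs_def] by (rule pole_lemma_open[OF hhol open_halfplane])
  have gh: "g z = g w0 + (z - w0) * h z" for z by (cases "z = w0") (auto simp: h_def)
  have hh: "h z = h w0 + (z - w0) * h2 z" for z by (cases "z = w0") (auto simp: h2_def)
  have cont: "isCont f w0" if "f holomorphic_on halfplane 0" for f
    using that w0H by (meson continuous_on_eq_continuous_at holomorphic_on_imp_continuous_on open_halfplane)
  define P where "P x = \<phi> (of_real x)" for x :: real
  have gP: "eventually (\<lambda>x. g (P x) = of_nat k powr (- of_real x)) at_top"
    using eventually_gt_at_top[of "0::real"] by eventually_elim (simp add: g_def P_def uphi halfplane_def)
  have k2: "k \<ge> 2" using km m by simp
  have "((\<lambda>x. g (P x)) \<longlongrightarrow> g w0) at_top"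
    by (rule isCont_tendsto_compose[OF cont[OF ghol]]) (use Pt in \<open>simp add: P_def\<close>)
  moreover have "((\<lambda>x. g (P x)) \<longlongrightarrow> 0) at_top"
    by (rule Lim_transform_eventually[OF two_neg_powr_0[OF k2]]) (use gP in \<open>auto elim: eventually_mono\<close>)
  ultimately have g0: "g w0 = 0" by (metis tendsto_unique trivial_limit_at_top_linorder)
  have Pt': "(P \<longlongrightarrow> w0) at_top" using Pt by (simp add: P_def[abs_def])
  have Pm': "((\<lambda>x::real. of_nat m powr (of_real x) * (P x - w0)) \<longlongrightarrow> cm) at_top" using Pm by (simp add: P_def)
  have mk: "0 < real m / real k" "real m / real k < 1" using km m by auto
  have decay: "((\<lambda>x::real. (of_nat m powr (of_real x)) * (of_nat k :: complex) powr (- of_real x)) \<longlongrightarrow> 0) at_top"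
  proof -
    have "norm ((of_nat m powr (of_real x)) * (of_nat k :: complex) powr (- of_real x)) = (real m / real k) powr x" for x
    proof -
      have "norm ((of_nat m powr (of_real x)) * (of_nat k :: complex) powr (- of_real x)) = real m powr x * real k powr (- x)"
        by (simp add: norm_mult norm_npow' norm_npow)
      also have "\<dots> = (real m / real k) powr x" using m km by (simp add: powr_divide powr_minus_divide)
      finally show ?thesis .
    qed
    moreover have "((\<lambda>x::real. (real m / real k) powr x) \<longlongrightarrow> 0) at_top"
      by (rule geo_decay[OF mk]) (simp add: filterlim_ident)
    ultimately have "((\<lambda>x::real. norm ((of_nat m powr (of_real x)) * (of_nat k :: complex) powr (- of_real x))) \<longlongrightarrow> 0) at_top"
      by simp
    thus ?thesis by (rule tendsto_norm_zero_cancel)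
  qed
  have ev1: "eventually (\<lambda>x. of_nat m powr (of_real x) * (of_nat k :: complex) powr (- of_real x)
        = (of_nat m powr (of_real x) * (P x - w0)) * h (P x)) at_top"
    using gP by eventually_elim (simp add: gh[of "P _"] g0 mult.assoc)
  have "((\<lambda>x. (of_nat m powr (of_real x) * (P x - w0)) * h (P x)) \<longlongrightarrow> cm * h w0) at_top"
    by (rule tendsto_mult[OF Pm' isCont_tendsto_compose[OF cont[OF hhol] Pt']])
  hence "((\<lambda>x. of_nat m powr (of_real x) * (of_nat k :: complex) powr (- of_real x)) \<longlongrightarrow> cm * h w0) at_top"
    by (rule Lim_transform_eventually) (rule eventually_mono[OF ev1], rule sym, assumption)
  with decay have "cm * h w0 = 0" by (metis tendsto_unique trivial_limit_at_top_linorder)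
  hence h0: "h w0 = 0" using cm by simp
  have ev2: "eventually (\<lambda>x. (of_nat m powr (of_real x)) ^ 2 * (of_nat k :: complex) powr (- of_real x)
        = (of_nat m powr (of_real x) * (P x - w0)) ^ 2 * h2 (P x)) at_top"
    using gP
  proof eventually_elim
    case (elim x)
    have e: "(of_nat k :: complex) powr (- of_real x) = (P x - w0) ^ 2 * h2 (P x)"
      using elim gh[of "P x"] hh[of "P x"] g0 h0 by (simp add: power2_eq_square mult.assoc)
    show ?case unfolding e by (simp add: power_mult_distrib)
  qed
  have "((\<lambda>x. (of_nat m powr (of_real x) * (P x - w0)) ^ 2 * h2 (P x)) \<longlongrightarrow> cm ^ 2 * h2 w0) at_top"
    by (rule tendsto_mult[OF tendsto_power[OF Pm'] isCont_tendsto_compose[OF cont[OF h2hol] Pt']])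
  hence L: "((\<lambda>x. (of_nat m powr (of_real x)) ^ 2 * (of_nat k :: complex) powr (- of_real x)) \<longlongrightarrow> cm ^ 2 * h2 w0) at_top"
    by (rule Lim_transform_eventually) (use ev2 in \<open>auto elim: eventually_mono\<close>)
  have big: "filterlim (\<lambda>x::real. norm ((of_nat m powr (of_real x)) ^ 2 * (of_nat k :: complex) powr (- of_real x))) at_top at_top"
  proof -
    have "norm ((of_nat m powr (of_real x)) ^ 2 * (of_nat k :: complex) powr (- of_real x)) = (real m * real m / real k) powr x" for x
    proof -
      have "norm ((of_nat m powr (of_real x)) ^ 2 * (of_nat k :: complex) powr (- of_real x))
          = (real m powr x) ^ 2 * real k powr (- x)"
        by (simp add: norm_mult norm_power norm_npow' norm_npow)
      also have "\<dots> = (real m * real m / real k) powr x" using m km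
        by (simp add: powr_divide powr_minus_divide powr_mult power2_eq_square)
      finally show ?thesis .
    qed
    moreover have "filterlim (\<lambda>x::real. (real m * real m / real k) powr x) at_top at_top"
    proof (rule q_powr_at_top)
      have "real k < real m * real m"
      proof -
        have "real m * real m \<ge> 2 * real m" using m by (intro mult_right_mono) auto
        moreover have "real m \<ge> 2" "real k = real m + 1" using m km by auto
        ultimately show ?thesis by linarith
      qed
      thus "real m * real m / real k > 1" using km by simp
    qed
    ultimately show ?thesis by simp
  qed
  show False by (rule norm_tendsto_at_top_False[OF _ L big]) simp
qed

lemma case_c0_0:
  fixes c :: "nat \<Rightarrow> complex"
  assumes auto: "Aplus_automorphism (comp_op \<phi>)"
    and bounded: "\<forall>a\<in>Aplus. \<exists>b\<in>Aplus. \<forall>s\<in>halfplane 0. dirichlet_val b s = dirichlet_val a (\<phi> s)"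
    and hol: "\<phi> holomorphic_on halfplane 0"
    and maps: "\<phi> ` halfplane 0 \<subseteq> halfplane 0"
    and nonconst: "\<not> (\<exists>w. \<forall>s\<in>halfplane 0. \<phi> s = w)"
    and \<sigma>1: "\<sigma>1 > 0" and summ: "summable (\<lambda>n. norm (c n) * real n powr (- \<sigma>1))"
    and phiPsi: "\<And>w. Re w \<ge> \<sigma>1 \<Longrightarrow> \<phi> w = (\<Sum>n. c n * of_nat n powr (- w))"
  shows False
proof (cases "\<forall>n\<ge>2. c n = 0")
  case True
  have const: "\<phi> w = c 1" if "Re w \<ge> \<sigma>1" for w
  proof -
    have "(\<lambda>n. c n * of_nat n powr (- w)) = (\<lambda>n. if n = 1 then c 1 else 0)"
    proof
      fix n show "c n * of_nat n powr (- w) = (if n = 1 then c 1 else 0)"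
        using True by (cases "n \<ge> 2") (auto simp: not_le less_Suc_eq)
    qed
    hence "(\<lambda>n. c n * of_nat n powr (- w)) sums c 1" using sums_single[of 1 "\<lambda>_. c 1"] by simp
    thus ?thesis using phiPsi[OF that] by (simp add: sums_iff)
  qed
  have "\<phi> z = c 1" if "z \<in> halfplane 0" for z
  proof (rule analytic_continuation_open[where s="halfplane \<sigma>1" and s'="halfplane 0" and f=\<phi> and g="\<lambda>_. c 1"])
    show "open (halfplane \<sigma>1)" "open (halfplane 0)" by (rule open_halfplane)+
    show "halfplane \<sigma>1 \<noteq> {}" by (auto simp: halfplane_def intro!: exI[of _ "of_real (\<sigma>1 + 1)"])
    show "connected (halfplane 0)" by (rule convex_connected[OF convex_halfplane])
    show "halfplane \<sigma>1 \<subseteq> halfplane 0" using \<sigma>1 by (auto simp: halfplane_def)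
    show "\<phi> holomorphic_on halfplane 0" by (rule hol)
    show "(\<lambda>_. c 1) holomorphic_on halfplane 0" by (rule holomorphic_on_const)
    show "\<phi> z = c 1" if "z \<in> halfplane \<sigma>1" for z using that const by (simp add: halfplane_def)
  qed (use that in auto)
  with nonconst show False by blast
next
  case False
  then obtain n0 where n0: "n0 \<ge> 2" "c n0 \<noteq> 0" by auto
  define m where "m = (LEAST n. 2 \<le> n \<and> c n \<noteq> 0)"
  have mP: "2 \<le> m \<and> c m \<noteq> 0" unfolding m_def by (rule LeastI[of _ n0]) (use n0 in auto)
  hence m: "m \<ge> 2" and cm: "c m \<noteq> 0" by auto
  have low: "\<And>k. 2 \<le> k \<Longrightarrow> k < m \<Longrightarrow> c k = 0"
  proof -
    fix k :: nat assume k: "2 \<le> k" "k < m"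
    have "\<not> (2 \<le> k \<and> c k \<noteq> 0)"
      using k(2) unfolding m_def by (rule not_less_Least)
    thus "c k = 0" using k(1) by blast
  qed
  have pos: "Re (\<Sum>n. c n * of_nat n powr (- w)) > 0" if "Re w \<ge> \<sigma>1" for w
  proof -
    have "w \<in> halfplane 0" using that \<sigma>1 by (simp add: halfplane_def)
    hence "\<phi> w \<in> halfplane 0" using maps by auto
    thus ?thesis using phiPsi[OF that] by (simp add: halfplane_def)
  qed
  have Rc1: "Re (c 1) > 0" by (rule Re_c1_pos[OF summ pos m low cm])
  obtain u where uA: "u \<in> Aplus" and uphi: "\<And>s. s \<in> halfplane 0 \<Longrightarrow> dirichlet_val u (\<phi> s) = of_nat (m + 1) powr (- s)"
    using preimage_ek[OF bounded auto, of "m + 1"] by auto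
  have Wt: "filterlim (\<lambda>x::real. Re (of_real x :: complex)) at_top at_top" by (simp add: filterlim_ident)
  have evp: "eventually (\<lambda>x::real. \<phi> (of_real x) = (\<Sum>n. c n * of_nat n powr (- of_real x))) at_top"
    using eventually_ge_at_top[of \<sigma>1] by eventually_elim (simp add: phiPsi)
  have L2: "((\<lambda>x::real. (\<Sum>n. c n * of_nat n powr (- of_real x))) \<longlongrightarrow> c 1) at_top"
    by (rule coeff_setup(2)[where W="\<lambda>x. of_real x"]) (fact summ m low Wt)+
  have L1: "((\<lambda>x::real. of_nat m powr (of_real x) * ((\<Sum>n. c n * of_nat n powr (- of_real x)) - c 1)) \<longlongrightarrow> c m) at_top"
    by (rule coeff_setup(1)[where W="\<lambda>x. of_real x"]) (fact summ m low Wt)+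
  have Pt: "((\<lambda>x::real. \<phi> (of_real x)) \<longlongrightarrow> c 1) at_top"
    by (rule Lim_transform_eventually[OF L2]) (rule eventually_mono[OF evp], rule sym, assumption)
  have Pm: "((\<lambda>x::real. of_nat m powr (of_real x) * (\<phi> (of_real x) - c 1)) \<longlongrightarrow> c m) at_top"
    by (rule Lim_transform_eventually[OF L1]) (rule eventually_mono[OF evp], simp)
  show False by (rule deriv_contra[OF uA uphi refl m Rc1 Pt Pm cm])
qed

theorem main_theorem:
  fixes \<phi> :: "complex \<Rightarrow> complex"
  assumes hol: "\<phi> holomorphic_on halfplane 0"
    and maps: "\<phi> ` halfplane 0 \<subseteq> halfplane 0"
    and nonconst: "\<not> (\<exists>w. \<forall>s\<in>halfplane 0. \<phi> s = w)"
    and form: "\<exists>c0::nat. \<exists>\<psi>\<in>Dclass. \<forall>s\<in>halfplane 0. \<phi> s = of_nat c0 * s + \<psi> s"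
    and bounded: "\<forall>a\<in>Aplus. \<exists>b\<in>Aplus.
                    \<forall>s\<in>halfplane 0. dirichlet_val b s = dirichlet_val a (\<phi> s)"
  shows "Aplus_automorphism (comp_op \<phi>) \<longleftrightarrow>
         (\<exists>\<tau>::real. \<forall>s\<in>halfplane 0. \<phi> s = s + \<i> * of_real \<tau>)"
proof
  assume "\<exists>\<tau>::real. \<forall>s\<in>halfplane 0. \<phi> s = s + \<i> * of_real \<tau>"
  then obtain \<tau> where "\<forall>s\<in>halfplane 0. \<phi> s = s + \<i> * of_real \<tau>" by blast
  thus "Aplus_automorphism (comp_op \<phi>)" by (rule if_direction[OF bounded])
next
  assume auto: "Aplus_automorphism (comp_op \<phi>)"
  obtain c0 :: nat and \<psi> where \<psi>: "\<psi> \<in> Dclass" and phi_eq: "\<forall>s\<in>halfplane 0. \<phi> s = of_nat c0 * s + \<psi> s"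
    using form by blast
  have "\<exists>c \<sigma>1. \<sigma>1 > 0 \<and> summable (\<lambda>n. norm (c n) * real n powr (- \<sigma>1)) \<and>
      (\<forall>w. Re w \<ge> \<sigma>1 \<longrightarrow> \<psi> w = (\<Sum>n. c n * of_nat n powr (- w)))"
  proof (rule Dclass_expand[OF \<psi>])
    fix \<sigma>1 c assume a: "\<sigma>1 > 0" "summable (\<lambda>n. norm (c n) * real n powr (- \<sigma>1))"
      "\<And>w. Re w \<ge> \<sigma>1 \<Longrightarrow> \<psi> w = (\<Sum>n. c n * of_nat n powr (- w))"
    show "\<exists>c \<sigma>1. \<sigma>1 > 0 \<and> summable (\<lambda>n. norm (c n) * real n powr (- \<sigma>1)) \<and>
      (\<forall>w. Re w \<ge> \<sigma>1 \<longrightarrow> \<psi> w = (\<Sum>n. c n * of_nat n powr (- w)))"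
      by (rule exI[of _ c], rule exI[of _ \<sigma>1]) (use a in auto)
  qed
  then obtain c :: "nat \<Rightarrow> complex" and \<sigma>1 where \<sigma>1: "\<sigma>1 > 0"
    and summ: "summable (\<lambda>n. norm (c n) * real n powr (- \<sigma>1))"
    and psi0: "\<forall>w. Re w \<ge> \<sigma>1 \<longrightarrow> \<psi> w = (\<Sum>n. c n * of_nat n powr (- w))"
    by blast
  have psi: "\<And>w. Re w \<ge> \<sigma>1 \<Longrightarrow> \<psi> w = (\<Sum>n. c n * of_nat n powr (- w))" using psi0 by blast
  define S where "S = (\<Sum>n. norm (c n) * real n powr (- \<sigma>1))"
  have ev: "eventually (\<lambda>x::real. Re (\<phi> (of_real x)) \<ge> real c0 * x - S) at_top"
    unfolding S_def by (rule Rephi_lower[OF phi_eq \<sigma>1 summ psi])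
  consider "c0 = 0" | "c0 = 1" | "c0 \<ge> 2" by linarith
  thus "\<exists>\<tau>::real. \<forall>s\<in>halfplane 0. \<phi> s = s + \<i> * of_real \<tau>"
  proof cases
    case 1
    have "\<phi> w = (\<Sum>n. c n * of_nat n powr (- w))" if "Re w \<ge> \<sigma>1" for w
    proof -
      have "w \<in> halfplane 0" using that \<sigma>1 by (simp add: halfplane_def)
      thus ?thesis using phi_eq psi[OF that] 1 by simp
    qed
    hence False by (rule case_c0_0[OF auto bounded hol maps nonconst \<sigma>1 summ])
    thus ?thesis ..
  next
    case 2
    have ev1: "eventually (\<lambda>x::real. Re (\<phi> (of_real x)) \<ge> real 1 * x - S) at_top"
      using ev 2 by simp
    show ?thesis by (rule case_c0_1[OF auto bounded hol maps ev1])
  next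
    case 3
    obtain u where uA: "u \<in> Aplus" and uphi: "\<And>s. s \<in> halfplane 0 \<Longrightarrow> dirichlet_val u (\<phi> s) = of_nat 2 powr (- s)"
      using preimage_ek[OF bounded auto, of 2] by auto
    have False by (rule case_c0_ge2[OF uA uphi ev 3])
    thus ?thesis ..
  qed
qed

theorem theorem15:
  fixes \<phi> :: "complex \<Rightarrow> complex"
  assumes hol: "\<phi> holomorphic_on halfplane 0"
    and maps: "\<phi> ` halfplane 0 \<subseteq> halfplane 0"
    and nonconst: "\<not> (\<exists>w. \<forall>s\<in>halfplane 0. \<phi> s = w)"
    and form: "\<exists>c0::nat. \<exists>\<psi>\<in>Dclass. \<forall>s\<in>halfplane 0. \<phi> s = of_nat c0 * s + \<psi> s"
    and bounded: "\<forall>a\<in>Aplus. \<exists>b\<in>Aplus.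
                    \<forall>s\<in>halfplane 0. dirichlet_val b s = dirichlet_val a (\<phi> s)"
  shows "Aplus_automorphism (comp_op \<phi>) \<longleftrightarrow>
         (\<exists>\<tau>::real. \<forall>s\<in>halfplane 0. \<phi> s = s + \<i> * of_real \<tau>)"
  by (rule main_theorem[OF hol maps nonconst form bounded])

end
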